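(* Let $N=1$ and $m_1\ge2$, so the problem is the social cost minimization $\min_{\mathbf x_1\in\mathbb R^{m_1}} f_1(\mathbf x_1)=\sum_{j=1}^{m_1}f_{1j}(\mathbf x_1)$, and let $\mathbf x_1^*$ be a (finite) minimizer. Suppose each $f_{1j}$ is $\mathcal C^2$, $(\mathbf x_1-\mathbf y_1)^T(\nabla f_1(\mathbf x_1)-\nabla f_1(\mathbf y_1))>0$ for all distinct $\mathbf x_1,\mathbf y_1\in\mathbb R^{m_1}$, and $\mathcal G_I^1$ and $\mathcal G_{C_k}^1$ for all $k\in\{1,\dots,m_1\}$ are undirected and connected. Consider the dynamics, for $j\in\{1,\dots,m_1\}$ and $k\in\mathcal N_{Ij}^1\cup\{j\}$: $\dot x_{1j}=-d_{1j}g_{1jj}$, $\dot w_{1jk}=-\sum_{l\in\mathcal N_{Ik}^1\cup\{k\}}a_1^{jl}(g_{1jk}-g_{1lk})$, $g_{1jk}=w_{1jk}+\partial f_{1j}(\mathbf x_1)/\partial x_{1k}$, with $d_{1j}=\delta\bar d_{1j}$, $\bar d_{1j}>0$ fixed, $w_{1jk}(0)=0$. Then for each pair of positive constants $(\Delta,v)$ there exists $\delta^*(\Delta,v)>0$ such that for each $\delta\in(0,\delta^* )$, every solution with $\|\chi_1(0)\|<\Delta$ satisfies $$\|\chi_1(t)\|\le\phi(\|\chi_1(0)\|,\delta t)+v\quad\text{for all }t\ge0,$$ where $\phi$ is a class-$\mathcal{KL}$ function.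
   Context: Agent $j\in\{1,\dots,m_1\}$ has action $x_{1j}\in\mathbb R$ and local cost $f_{1j}:\mathbb R^{m_1}\to\mathbb R$; $\mathbf x_1=(x_{11},\dots,x_{1m_1})^T$. Interference graph $\mathcal G_I^1$: the undirected graph on vertex set $\{1,\dots,m_1\}$ in which distinct $j,k$ are adjacent iff $f_{1j}$ depends explicitly on $x_{1k}$ or $f_{1k}$ depends explicitly on $x_{1j}$; $\mathcal N_{Ik}^1$ is the neighbor set of $k$ and $N_{Ik}^1=|\mathcal N_{Ik}^1|$. In particular $\partial f_{1j}/\partial x_{1k}\equiv0$ whenever $j\notin\mathcal N_{Ik}^1\cup\{k\}$. Communication graph $\mathcal G_C^1$: an undirected weighted graph on $\{1,\dots,m_1\}$ with adjacency matrix $(a_1^{jl})$, $a_1^{jl}=a_1^{lj}\ge0$, $a_1^{jj}=0$. The interference-to-$k$ communication graph $\mathcal G_{C_k}^1$ is the subgraph of $\mathcal G_C^1$ induced on the vertex set $\mathcal N_{Ik}^1\cup\{k\}$ (with inherited weights); its number of vertices is $N_{C_k^1}=N_{Ik}^1+1$. Error coordinates: $G_{1k}$ is the vector of $g_{1jk}$ over $j\in\mathcal N_{Ik}^1\cup\{k\}$; $R_{1k}\in\mathbb R^{N_{C_k^1}\times(N_{C_k^1}-1)}$ is any matrix such that $[\mathbf 1_{N_{C_k^1}}/\sqrt{N_{C_k^1}}\ \ R_{1k}]$ is orthogonal ($\mathbf 1_n$ the all-ones vector); $\bar G_{1k}=R_{1k}^TG_{1k}$, $\bar G_1=(\bar G_{11}^T,\dots,\bar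 G_{1m_1}^T)^T$, and $\chi_1(t)=(\bar G_1(t)^T,(\mathbf x_1(t)-\mathbf x_1^* )^T)^T$. *)

theory Defs
  imports "HOL-Analysis.Analysis"
begin

definition pderiv_k :: "(real^'n \<Rightarrow> real) \<Rightarrow> 'n \<Rightarrow> real^'n \<Rightarrow> real" where
  "pderiv_k f k x = frechet_derivative f (at x) (axis k 1)"

definition C1_fun :: "(real^'n \<Rightarrow> real) \<Rightarrow> bool" where
  "C1_fun g \<longleftrightarrow> (\<forall>x. g differentiable (at x)) \<and> (\<forall>k. continuous_on UNIV (pderiv_k g k))"

definition C2_fun :: "(real^'n \<Rightarrow> real) \<Rightarrow> bool" where
  "C2_fun g \<longleftrightarrow> (\<forall>x. g differentiable (at x)) \<and> (\<forall>k. C1_fun (pderiv_k g k))"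

definition depends_on :: "(real^'n \<Rightarrow> real) \<Rightarrow> 'n \<Rightarrow> bool" where
  "depends_on g k \<longleftrightarrow> (\<exists>x t. g x \<noteq> g (\<chi> i. if i = k then t else x $ i))"

definition NI :: "('n \<Rightarrow> real^'n \<Rightarrow> real) \<Rightarrow> 'n \<Rightarrow> 'n set" where
  "NI f k = {j. j \<noteq> k \<and> (depends_on (f j) k \<or> depends_on (f k) j)}"

text \<open>Vertex set of the interference-to-k communication graph.\<close>
definition VC :: "('n \<Rightarrow> real^'n \<Rightarrow> real) \<Rightarrow> 'n \<Rightarrow> 'n set" where
  "VC f k = NI f k \<union> {k}"

definition interference_connected :: "('n \<Rightarrow> real^'n \<Rightarrow> real) \<Rightarrow> bool" where
  "interference_connected f \<longleftrightarrow>
     (\<forall>j k. (j, k) \<in> {(p, q). q \<in> NI f p}\<^sup>*)"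

definition induced_connected :: "('n \<Rightarrow> 'n \<Rightarrow> real) \<Rightarrow> 'n set \<Rightarrow> bool" where
  "induced_connected a V \<longleftrightarrow>
     (\<forall>j\<in>V. \<forall>l\<in>V. (j, l) \<in> {(p, q). p \<in> V \<and> q \<in> V \<and> a p q > 0}\<^sup>*)"

definition class_K :: "(real \<Rightarrow> real) \<Rightarrow> bool" where
  "class_K \<alpha> \<longleftrightarrow> continuous_on {0..} \<alpha> \<and> \<alpha> 0 = 0 \<and> strict_mono_on {0..} \<alpha>"

definition class_KL :: "(real \<Rightarrow> real \<Rightarrow> real) \<Rightarrow> bool" where
  "class_KL \<beta> \<longleftrightarrow> continuous_on ({0..} \<times> {0..}) (\<lambda>(r, s). \<beta> r s)
     \<and> (\<forall>s\<ge>0. class_K (\<lambda>r. \<beta> r s))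
     \<and> (\<forall>r\<ge>0. antimono_on {0..} (\<beta> r) \<and> ((\<beta> r) \<longlongrightarrow> 0) at_top)"

text \<open>Admissible R_k: columns R k i (i < N_k - 1), supported on VC f k, such that
  [1/sqrt N_k, R_k] is orthogonal (orthonormal columns of a square matrix).\<close>
definition admissible_R :: "('n \<Rightarrow> real^'n \<Rightarrow> real) \<Rightarrow> ('n \<Rightarrow> nat \<Rightarrow> 'n \<Rightarrow> real) \<Rightarrow> bool" where
  "admissible_R f R \<longleftrightarrow> (\<forall>k.
      (\<forall>i < card (VC f k) - 1. \<forall>i' < card (VC f k) - 1.
         (\<Sum>j\<in>VC f k. R k i j * R k i' j) = (if i = i' then 1 else 0))
    \<and> (\<forall>i < card (VC f k) - 1. (\<Sum>j\<in>VC f k. R k i j) = 0))"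

text \<open>Norm of chi_1(t) = (Gbar_1(t), x_1(t) - x_1^* ), with Gbar_{1k} = R_k^T G_{1k}.\<close>
definition chi_norm :: "('n \<Rightarrow> real^'n \<Rightarrow> real) \<Rightarrow> ('n \<Rightarrow> nat \<Rightarrow> 'n \<Rightarrow> real)
    \<Rightarrow> ('n \<Rightarrow> 'n \<Rightarrow> real) \<Rightarrow> real^'n \<Rightarrow> real^'n \<Rightarrow> real" where
  "chi_norm f R g x xstar = sqrt
     ((\<Sum>k\<in>UNIV. \<Sum>i<card (VC f k) - 1. (\<Sum>j\<in>VC f k. R k i j * g j k)\<^sup>2)
      + (norm (x - xstar))\<^sup>2)"

end

theory Submission
  imports Defs
begin

lemma cont_from_der:
  fixes W W' :: "real \<Rightarrow> real"
  assumes der: "\<forall>t\<ge>0. (W has_real_derivative W' t) (at t within {0..})"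
  shows "continuous_on {0..} W"
  unfolding continuous_on_eq_continuous_within using der by (auto intro: DERIV_continuous)

lemma der_at:
  fixes W W' :: "real \<Rightarrow> real"
  assumes der: "\<forall>t\<ge>0. (W has_real_derivative W' t) (at t within {0..})" and "t > 0"
  shows "(W has_real_derivative W' t) (at t)"
proof -
  have "(W has_real_derivative W' t) (at t within {0..})" using der assms(2) by simp
  then have "(W has_real_derivative W' t) (at t within {0<..})"
    by (rule DERIV_subset) auto
  then show ?thesis using at_within_open[of t "{0<..}"] assms(2) by auto
qed

lemma inv_lemma:
  fixes W W' :: "real \<Rightarrow> real"
  assumes der: "\<forall>t\<ge>0. (W has_real_derivative W' t) (at t within {0..})"
  and t0: "0 \<le> t0" "W t0 \<le> m" and mB: "m < B"
  and neg: "\<forall>t\<ge>t0. m \<le> W t \<and> W t \<le> B \<longrightarrow> W' t \<le> 0"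
  shows "\<forall>t\<ge>t0. W t \<le> m"
proof (rule ccontr)
  assume "\<not> ?thesis"
  then obtain t1 where t1: "t1 \<ge> t0" "W t1 > m" by auto
  have cW: "continuous_on {0..} W" using cont_from_der[OF der] .
  define c where "c = min (W t1) B"
  have mc: "m < c" using t1 mB by (auto simp: c_def)
  define S where "S = {t \<in> {t0..t1}. W t \<le> m}"
  have cS: "closed S" unfolding S_def
    by (rule continuous_on_closed_Collect_le) (rule continuous_on_subset[OF cW], use t0 in auto)+
  have S0: "t0 \<in> S" using t1 t0 by (auto simp: S_def)
  define ta where "ta = Sup S"
  have taS: "ta \<in> S" unfolding ta_def
    by (rule closed_contains_Sup) (use cS S0 in \<open>auto simp: S_def bdd_above_def\<close>)
  have gt: "\<forall>t. ta < t \<and> t \<le> t1 \<longrightarrow> m < W t"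
  proof (intro allI impI)
    fix t assume "ta < t \<and> t \<le> t1"
    moreover have "t \<notin> S" proof
      assume "t \<in> S" then have "t \<le> ta" unfolding ta_def
        by (intro cSup_upper) (auto simp: S_def bdd_above_def)
      with \<open>ta < t \<and> t \<le> t1\<close> show False by simp
    qed
    ultimately show "m < W t" using taS by (auto simp: S_def)
  qed
  have ta1: "ta < t1" using taS t1 by (auto simp: S_def) (metis le_less not_le)
  define T where "T = {t \<in> {ta..t1}. c \<le> W t}"
  have cT: "closed T" unfolding T_def
  proof (rule continuous_on_closed_Collect_le)
    show "continuous_on {ta..t1} W"
      by (rule continuous_on_subset[OF cW]) (use taS t0 in \<open>auto simp: S_def\<close>)
  qed auto
  have T1: "t1 \<in> T" using ta1 by (auto simp: T_def c_def)
  define tb where "tb = Inf T"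
  have tbT: "tb \<in> T" unfolding tb_def
    by (rule closed_contains_Inf) (use cT T1 in \<open>auto simp: T_def bdd_below_def\<close>)
  have lt: "\<forall>t. ta \<le> t \<and> t < tb \<longrightarrow> W t < c"
  proof (intro allI impI)
    fix t assume a: "ta \<le> t \<and> t < tb"
    have "t \<le> t1" using a tbT by (auto simp: T_def)
    moreover have "t \<notin> T" proof
      assume "t \<in> T" then have "tb \<le> t" unfolding tb_def
        by (intro cInf_lower) (auto simp: T_def bdd_below_def)
      with a show False by simp
    qed
    ultimately show "W t < c" using a by (auto simp: T_def)
  qed
  have Wta: "W ta \<le> m" using taS by (auto simp: S_def)
  have Wtb: "c \<le> W tb" using tbT by (auto simp: T_def)
  have tatb: "ta \<le> tb" using tbT by (auto simp: T_def)
  have "W tb \<le> W ta"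
  proof (rule DERIV_nonpos_imp_decreasing_open[OF tatb])
    fix t assume a: "ta < t" "t < tb"
    have "t0 \<le> ta" using taS by (auto simp: S_def)
    hence tpos: "t > 0 \<or> t \<ge> t0" using a by auto
    have "t > 0" proof (cases "t0 > 0") case True then show ?thesis using a \<open>t0 \<le> ta\<close> by simp
    next case False then show ?thesis using a \<open>t0 \<le> ta\<close> t0 by simp qed
    have "t \<le> t1" using a tbT by (auto simp: T_def)
    have "m < W t" using gt a \<open>t \<le> t1\<close> by auto
    moreover have "W t < c" using lt a by auto
    ultimately have "W' t \<le> 0" using neg a \<open>t0 \<le> ta\<close> c_def by auto
    then show "\<exists>y. (W has_real_derivative y) (at t) \<and> y \<le> 0"
      using der_at[OF der \<open>t > 0\<close>] by blast
  next
    show "continuous_on {ta..tb} W"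
      by (rule continuous_on_subset[OF cW]) (use taS t0 in \<open>auto simp: S_def\<close>)
  qed
  then show False using Wta Wtb mc by simp
qed

lemma decay_lemma:
  fixes W W' :: "real \<Rightarrow> real"
  assumes der: "\<forall>t\<ge>0. (W has_real_derivative W' t) (at t within {0..})"
  and "0 \<le> t0" "t0 \<le> t1"
  and neg: "\<forall>t. t0 \<le> t \<and> t \<le> t1 \<longrightarrow> W' t \<le> - k"
  shows "W t1 \<le> W t0 - k * (t1 - t0)"
proof -
  have cW: "continuous_on {0..} W" using cont_from_der[OF der] .
  have "(\<lambda>t. W t + k * t) t1 \<le> (\<lambda>t. W t + k * t) t0"
  proof (rule DERIV_nonpos_imp_decreasing_open[OF assms(3)])
    fix t assume a: "t0 < t" "t < t1"
    have "t > 0" using a assms by simp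
    have "((\<lambda>t. W t + k * t) has_real_derivative W' t + k) (at t)"
      using der_at[OF der \<open>t > 0\<close>] by (auto intro!: derivative_eq_intros)
    moreover have "W' t + k \<le> 0" using neg a by (smt (verit))
    ultimately show "\<exists>y. ((\<lambda>t. W t + k * t) has_real_derivative y) (at t) \<and> y \<le> 0"
      by blast
  next
    show "continuous_on {t0..t1} (\<lambda>t. W t + k * t)"
      by (intro continuous_intros continuous_on_subset[OF cW]) (use assms in auto)
  qed
  then show ?thesis by (simp add: algebra_simps)
qed

definition cl :: "real \<Rightarrow> real" where "cl x = max 0 (min 1 x)"

lemma cl_lip: "\<bar>cl x - cl y\<bar> \<le> \<bar>x - y\<bar>" by (simp add: cl_def)
lemma cl_range: "0 \<le> cl x" "cl x \<le> 1" by (auto simp: cl_def)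
lemma cl_mono: "x \<le> y \<Longrightarrow> cl x \<le> cl y" by (simp add: cl_def)
lemma cl_neg: "x \<le> 0 \<Longrightarrow> cl x = 0" by (simp add: cl_def)
lemma cl_one: "1 \<le> x \<Longrightarrow> cl x = 1" by (simp add: cl_def)

lemma sup_lip:
  fixes F :: "'p \<Rightarrow> real" and G :: "'p \<Rightarrow> real"
  assumes ne: "P \<noteq> {}" and bF: "\<forall>p\<in>P. F p \<le> B1" and bG: "\<forall>p\<in>P. G p \<le> B2"
  and lip: "\<forall>p\<in>P. \<bar>F p - G p\<bar> \<le> K"
  shows "\<bar>Sup (F ` P) - Sup (G ` P)\<bar> \<le> K"
proof -
  have bddF: "bdd_above (F ` P)" using bF by (auto simp: bdd_above_def)
  have bddG: "bdd_above (G ` P)" using bG by (auto simp: bdd_above_def)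
  have 1: "Sup (F ` P) \<le> Sup (G ` P) + K"
  proof (rule cSup_least)
    show "F ` P \<noteq> {}" using ne by simp
    fix y assume "y \<in> F ` P"
    then obtain p where p: "p \<in> P" "y = F p" by auto
    have "G p \<le> Sup (G ` P)" using p bddG by (intro cSup_upper) auto
    then show "y \<le> Sup (G ` P) + K" using lip p by (smt (verit))
  qed
  have 2: "Sup (G ` P) \<le> Sup (F ` P) + K"
  proof (rule cSup_least)
    show "G ` P \<noteq> {}" using ne by simp
    fix y assume "y \<in> G ` P"
    then obtain p where p: "p \<in> P" "y = G p" by auto
    have "F p \<le> Sup (F ` P)" using p bddF by (intro cSup_upper) auto
    then show "y \<le> Sup (F ` P) + K" using lip p by (smt (verit))
  qed
  show ?thesis using 1 2 by simp
qed

lemma prod_lip: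
  fixes u A B A' B' :: real
  assumes "0 \<le> u" "u \<le> L" "0 \<le> A" "A \<le> 1" "0 \<le> B" "B \<le> 1" "0 \<le> A'" "A' \<le> 1" "0 \<le> B'" "B' \<le> 1"
  shows "\<bar>u * A * B - u * A' * B'\<bar> \<le> L * (\<bar>A - A'\<bar> + \<bar>B - B'\<bar>)"
proof -
  have e: "u * A * B - u * A' * B' = u * ((A - A') * B + A' * (B - B'))" by (simp add: algebra_simps)
  have "\<bar>(A - A') * B + A' * (B - B')\<bar> \<le> \<bar>A - A'\<bar> * B + A' * \<bar>B - B'\<bar>"
    using assms by (simp add: abs_mult abs_triangle_ineq[THEN order_trans])
  also have "\<dots> \<le> \<bar>A - A'\<bar> + \<bar>B - B'\<bar>"
  proof -
    have "\<bar>A - A'\<bar> * B \<le> \<bar>A - A'\<bar>" using assms by (intro mult_right_le_one_le) auto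
    moreover have "A' * \<bar>B - B'\<bar> \<le> \<bar>B - B'\<bar>" using assms by (intro mult_left_le_one_le) auto
    ultimately show ?thesis by simp
  qed
  finally have "\<bar>(A - A') * B + A' * (B - B')\<bar> \<le> \<bar>A - A'\<bar> + \<bar>B - B'\<bar>" .
  then have "\<bar>u * ((A - A') * B + A' * (B - B'))\<bar> \<le> u * (\<bar>A - A'\<bar> + \<bar>B - B'\<bar>)"
    using assms by (simp add: abs_mult mult_left_mono)
  also have "\<dots> \<le> L * (\<bar>A - A'\<bar> + \<bar>B - B'\<bar>)" using assms by (intro mult_right_mono) auto
  finally show ?thesis using e by simp
qed


lemma KL_exists:
  fixes T :: "real \<Rightarrow> real \<Rightarrow> real" and g :: "real \<Rightarrow> real" and c :: real
  assumes c: "c > 0"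
  and Tmono: "\<forall>r r' \<mu>. 0 \<le> r \<and> r \<le> r' \<and> 0 < \<mu> \<longrightarrow> T r \<mu> \<le> T r' \<mu>"
  and gnn: "\<forall>\<mu>>0. g \<mu> \<ge> 0"
  and gsmall: "\<forall>\<epsilon>>0. \<exists>\<mu>>0. g \<mu> < \<epsilon>"
  shows "\<exists>\<phi>. class_KL \<phi> \<and> (\<forall>r\<ge>0. \<forall>s\<ge>0. \<forall>u. 0 \<le> u \<and> u \<le> c*r \<and> (\<forall>\<mu>>0. T r \<mu> \<le> s \<longrightarrow> u \<le> g \<mu>) \<longrightarrow> u \<le> \<phi> r s)"
proof -
  define P where "P = {(\<rho>,\<sigma>,u). 0 \<le> \<rho> \<and> 0 \<le> \<sigma> \<and> 0 \<le> u \<and> u \<le> c*\<rho> \<and> (\<forall>\<mu>>0. T \<rho> \<mu> \<le> \<sigma> \<longrightarrow> u \<le> g \<mu>)}"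
  define tm where "tm = (\<lambda>r s (p::real\<times>real\<times>real). case p of (\<rho>,\<sigma>,u) \<Rightarrow> u * cl (1+\<sigma>-s) * cl (1+r-\<rho>))"
  define \<phi>0 where "\<phi>0 = (\<lambda>r s. Sup (tm r s ` P))"
  define \<phi> where "\<phi> = (\<lambda>r s. min (\<phi>0 r s) (c*r) + r * exp (-s))"
  have P0: "(0,0,0) \<in> P" using gnn by (auto simp: P_def)
  have Pne: "P \<noteq> {}" using P0 by auto
  have tm_nn: "\<And>r s p. p \<in> P \<Longrightarrow> 0 \<le> tm r s p"
    by (auto simp: P_def tm_def cl_range)
  have tm_le_u: "\<And>r s \<rho> \<sigma> u. (\<rho>,\<sigma>,u) \<in> P \<Longrightarrow> tm r s (\<rho>,\<sigma>,u) \<le> u"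
  proof -
    fix r s \<rho> \<sigma> u assume "(\<rho>,\<sigma>,u) \<in> P"
    then have "0 \<le> u" by (auto simp: P_def)
    have "cl (1+\<sigma>-s) * cl (1+r-\<rho>) \<le> 1" using cl_range by (simp add: mult_le_one)
    then have "u * (cl (1+\<sigma>-s) * cl (1+r-\<rho>)) \<le> u * 1" using \<open>0 \<le> u\<close> by (intro mult_left_mono) auto
    then show "tm r s (\<rho>,\<sigma>,u) \<le> u" by (simp add: tm_def mult.assoc)
  qed
  have tm_bd: "\<And>r s p. p \<in> P \<Longrightarrow> tm r s p \<le> c * (max r 0 + 1)"
  proof -
    fix r s p assume pP: "p \<in> P"
    obtain \<rho> \<sigma> u where p: "p = (\<rho>,\<sigma>,u)" by (cases p) auto
    show "tm r s p \<le> c * (max r 0 + 1)"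
    proof (cases "1 + r - \<rho> \<le> 0")
      case True then show ?thesis using c by (simp add: p tm_def cl_neg)
    next
      case False
      then have "u \<le> c * (max r 0 + 1)" using pP p c
        by (auto simp: P_def) (smt (verit, best) mult_left_mono)
      moreover have "tm r s p \<le> u" using tm_le_u pP p by blast
      ultimately show ?thesis by linarith
    qed
  qed
  have bdd: "\<And>r s. bdd_above (tm r s ` P)" unfolding bdd_above_def using tm_bd by blast
  have phi0_nn: "\<And>r s. 0 \<le> \<phi>0 r s"
  proof -
    fix r s
    have "tm r s (0,0,0) \<le> \<phi>0 r s" unfolding \<phi>0_def using P0 bdd by (intro cSup_upper) auto
    then show "0 \<le> \<phi>0 r s" using tm_nn[OF P0] by (smt (verit))
  qed
  have phi0_ge: "\<And>r s u. (r,s,u) \<in> P \<Longrightarrow> u \<le> \<phi>0 r s"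
  proof -
    fix r s u assume a: "(r,s,u) \<in> P"
    have "tm r s (r,s,u) = u" by (simp add: tm_def cl_one)
    moreover have "tm r s (r,s,u) \<le> \<phi>0 r s" unfolding \<phi>0_def using a bdd by (intro cSup_upper) auto
    ultimately show "u \<le> \<phi>0 r s" by simp
  qed
  have anti: "\<And>r s s'. s \<le> s' \<Longrightarrow> \<phi>0 r s' \<le> \<phi>0 r s"
  proof -
    fix r s s' :: real assume ss: "s \<le> s'"
    show "\<phi>0 r s' \<le> \<phi>0 r s" unfolding \<phi>0_def
    proof (rule cSup_least)
      show "tm r s' ` P \<noteq> {}" using Pne by simp
      fix y assume "y \<in> tm r s' ` P"
      then obtain \<rho> \<sigma> u where p: "(\<rho>,\<sigma>,u) \<in> P" "y = tm r s' (\<rho>,\<sigma>,u)" by auto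
      have u: "0 \<le> u" using p by (auto simp: P_def)
      have "y \<le> tm r s (\<rho>,\<sigma>,u)" using p u ss cl_range
        by (auto simp: tm_def intro!: mult_right_mono mult_left_mono cl_mono)
      also have "\<dots> \<le> Sup (tm r s ` P)" using p bdd by (intro cSup_upper) auto
      finally show "y \<le> Sup (tm r s ` P)" .
    qed
  qed
  have mono: "\<And>r r' s. r \<le> r' \<Longrightarrow> \<phi>0 r s \<le> \<phi>0 r' s"
  proof -
    fix r r' s :: real assume rr: "r \<le> r'"
    show "\<phi>0 r s \<le> \<phi>0 r' s" unfolding \<phi>0_def
    proof (rule cSup_least)
      show "tm r s ` P \<noteq> {}" using Pne by simp
      fix y assume "y \<in> tm r s ` P"
      then obtain \<rho> \<sigma> u where p: "(\<rho>,\<sigma>,u) \<in> P" "y = tm r s (\<rho>,\<sigma>,u)" by auto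
      have u: "0 \<le> u" using p by (auto simp: P_def)
      have "y \<le> tm r' s (\<rho>,\<sigma>,u)" using p u rr cl_range
        by (auto simp: tm_def intro!: mult_left_mono cl_mono mult_nonneg_nonneg)
      also have "\<dots> \<le> Sup (tm r' s ` P)" using p bdd by (intro cSup_upper) auto
      finally show "y \<le> Sup (tm r' s ` P)" .
    qed
  qed
  have decay: "\<And>r \<epsilon>. 0 \<le> r \<Longrightarrow> 0 < \<epsilon> \<Longrightarrow> \<exists>S. \<forall>s\<ge>S. \<phi>0 r s \<le> \<epsilon>"
  proof -
    fix r \<epsilon> :: real assume r: "0 \<le> r" and e: "0 < \<epsilon>"
    obtain \<mu> where mu: "\<mu> > 0" "g \<mu> < \<epsilon>" using gsmall e by auto
    show "\<exists>S. \<forall>s\<ge>S. \<phi>0 r s \<le> \<epsilon>"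
    proof (intro exI allI impI)
      fix s assume sS: "T (r+1) \<mu> + 1 \<le> s"
      show "\<phi>0 r s \<le> \<epsilon>" unfolding \<phi>0_def
      proof (rule cSup_least)
        show "tm r s ` P \<noteq> {}" using Pne by simp
        fix y assume "y \<in> tm r s ` P"
        then obtain \<rho> \<sigma> u where p: "(\<rho>,\<sigma>,u) \<in> P" "y = tm r s (\<rho>,\<sigma>,u)" by auto
        show "y \<le> \<epsilon>"
        proof (cases "1+\<sigma>-s \<le> 0 \<or> 1+r-\<rho> \<le> 0")
          case True then show ?thesis using p e by (auto simp: tm_def cl_neg)
        next
          case False
          then have "\<rho> \<le> r + 1" "T (r+1) \<mu> < \<sigma>" using sS by auto
          moreover have "0 \<le> \<rho>" using p by (auto simp: P_def)
          ultimately have "T \<rho> \<mu> \<le> \<sigma>" using Tmono mu by (smt (verit))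
          then have "u \<le> g \<mu>" using p mu by (auto simp: P_def)
          then show ?thesis using tm_le_u[OF p(1), of r s] p mu by simp
        qed
      qed
    qed
  qed
  have lip: "\<And>R r r' s s'. 0 \<le> r \<Longrightarrow> r \<le> R \<Longrightarrow> 0 \<le> r' \<Longrightarrow> r' \<le> R \<Longrightarrow>
     \<bar>\<phi>0 r s - \<phi>0 r' s'\<bar> \<le> c * (R + 1) * (\<bar>s - s'\<bar> + \<bar>r - r'\<bar>)"
  proof -
    fix R r r' s s' :: real assume rr: "0 \<le> r" "r \<le> R" "0 \<le> r'" "r' \<le> R"
    show "\<bar>\<phi>0 r s - \<phi>0 r' s'\<bar> \<le> c * (R + 1) * (\<bar>s - s'\<bar> + \<bar>r - r'\<bar>)"
      unfolding \<phi>0_def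
    proof (rule sup_lip[OF Pne])
      show "\<forall>p\<in>P. tm r s p \<le> c * (max r 0 + 1)" using tm_bd by auto
      show "\<forall>p\<in>P. tm r' s' p \<le> c * (max r' 0 + 1)" using tm_bd by auto
      show "\<forall>p\<in>P. \<bar>tm r s p - tm r' s' p\<bar> \<le> c * (R + 1) * (\<bar>s - s'\<bar> + \<bar>r - r'\<bar>)"
      proof
        fix p assume pP: "p \<in> P"
        obtain \<rho> \<sigma> u where p: "p = (\<rho>,\<sigma>,u)" by (cases p) auto
        show "\<bar>tm r s p - tm r' s' p\<bar> \<le> c * (R + 1) * (\<bar>s - s'\<bar> + \<bar>r - r'\<bar>)"
        proof (cases "\<rho> \<ge> R + 1")
          case True
          then have "cl (1+r-\<rho>) = 0" "cl (1+r'-\<rho>) = 0" using rr by (auto intro: cl_neg)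
          then show ?thesis using c rr by (simp add: p tm_def)
        next
          case False
          have u: "0 \<le> u" "u \<le> c * (R+1)" using pP p False c
            by (auto simp: P_def) (smt (verit, best) mult_left_mono)
          have "\<bar>u * cl (1+\<sigma>-s) * cl (1+r-\<rho>) - u * cl (1+\<sigma>-s') * cl (1+r'-\<rho>)\<bar>
              \<le> c * (R+1) * (\<bar>cl (1+\<sigma>-s) - cl (1+\<sigma>-s')\<bar> + \<bar>cl (1+r-\<rho>) - cl (1+r'-\<rho>)\<bar>)"
            by (rule prod_lip) (use u cl_range in auto)
          also have "\<dots> \<le> c * (R+1) * (\<bar>s - s'\<bar> + \<bar>r - r'\<bar>)"
          proof (rule mult_left_mono)
            have "\<bar>cl (1+\<sigma>-s) - cl (1+\<sigma>-s')\<bar> \<le> \<bar>s - s'\<bar>" using cl_lip[of "1+\<sigma>-s" "1+\<sigma>-s'"] by simp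
            moreover have "\<bar>cl (1+r-\<rho>) - cl (1+r'-\<rho>)\<bar> \<le> \<bar>r - r'\<bar>" using cl_lip[of "1+r-\<rho>" "1+r'-\<rho>"] by simp
            ultimately show "\<bar>cl (1+\<sigma>-s) - cl (1+\<sigma>-s')\<bar> + \<bar>cl (1+r-\<rho>) - cl (1+r'-\<rho>)\<bar> \<le> \<bar>s - s'\<bar> + \<bar>r - r'\<bar>" by simp
            show "0 \<le> c * (R+1)" using c rr by simp
          qed
          finally show ?thesis by (simp add: p tm_def)
        qed
      qed
    qed
  qed
  have cont0: "continuous_on ({0..} \<times> {0..}) (\<lambda>x. \<phi>0 (fst x) (snd x))"
    unfolding continuous_on_iff
  proof (intro ballI allI impI)
    fix x :: "real \<times> real" and e :: real assume x: "x \<in> {0..} \<times> {0..}" and e: "0 < e"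
    obtain r s where xrs: "x = (r,s)" by (cases x) auto
    have r: "0 \<le> r" using x xrs by auto
    define L where "L = c * (r + 2)"
    have L: "0 < L" using c r by (simp add: L_def)
    define d where "d = min 1 (e / (2*L))"
    have d: "0 < d" using e L by (simp add: d_def)
    show "\<exists>d>0. \<forall>x'\<in>{0..} \<times> {0..}. dist x' x < d \<longrightarrow> dist (\<phi>0 (fst x') (snd x')) (\<phi>0 (fst x) (snd x)) < e"
    proof (intro exI[of _ d] conjI ballI impI d)
      fix x' :: "real \<times> real" assume x': "x' \<in> {0..} \<times> {0..}" and dx: "dist x' x < d"
      obtain r' s' where xrs': "x' = (r',s')" by (cases x') auto
      have "\<bar>r' - r\<bar> \<le> dist x' x" "\<bar>s' - s\<bar> \<le> dist x' x" using xrs xrs'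
        by (auto simp: dist_Pair_Pair dist_real_def intro: real_sqrt_sum_squares_ge1 real_sqrt_sum_squares_ge2)
      then have dr: "\<bar>r' - r\<bar> < d" "\<bar>s' - s\<bar> < d" using dx by auto
      have r': "0 \<le> r'" "r' \<le> r + 1" using x' xrs' dr d_def by auto
      have "\<bar>\<phi>0 r' s' - \<phi>0 r s\<bar> \<le> c * (r + 1 + 1) * (\<bar>s' - s\<bar> + \<bar>r' - r\<bar>)"
        by (rule lip) (use r r' in auto)
      also have "\<dots> < L * (2 * d)"
      proof -
        have "c * (r + 1 + 1) = L" by (simp add: L_def)
        moreover have "\<bar>s' - s\<bar> + \<bar>r' - r\<bar> < 2 * d" using dr by simp
        ultimately show ?thesis using L by simp
      qed
      also have "\<dots> \<le> e" using L e unfolding d_def by (simp add: field_simps min_def)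
      finally show "dist (\<phi>0 (fst x') (snd x')) (\<phi>0 (fst x) (snd x)) < e"
        by (simp add: xrs xrs' dist_real_def)
    qed
  qed
  have cont: "continuous_on ({0..} \<times> {0..}) (\<lambda>(r, s). \<phi> r s)"
  proof -
    have "continuous_on ({0..} \<times> {0..}) (\<lambda>x. min (\<phi>0 (fst x) (snd x)) (c * fst x) + fst x * exp (- snd x))"
      by (intro continuous_intros cont0)
    then show ?thesis by (simp add: \<phi>_def case_prod_beta)
  qed
  have KL: "class_KL \<phi>"
    unfolding class_KL_def
  proof (intro conjI allI impI)
    show "continuous_on ({0..} \<times> {0..}) (\<lambda>(r, s). \<phi> r s)" by (rule cont)
  next
    fix s :: real assume s: "0 \<le> s"
    show "class_K (\<lambda>r. \<phi> r s)" unfolding class_K_def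
    proof (intro conjI)
      have "continuous_on {0..} (\<lambda>r. (\<lambda>(r, s). \<phi> r s) (r, s))"
        by (rule continuous_on_compose2[OF cont]) (use s in \<open>auto intro!: continuous_intros\<close>)
      then show "continuous_on {0..} (\<lambda>r. \<phi> r s)" by simp
      show "\<phi> 0 s = 0" using phi0_nn[of 0 s] by (simp add: \<phi>_def)
      show "strict_mono_on {0..} (\<lambda>r. \<phi> r s)"
      proof (rule strict_mono_onI)
        fix r r' :: real assume "r \<in> {0..}" "r' \<in> {0..}" "r < r'"
        moreover have "c * r \<le> c * r'" using \<open>r < r'\<close> c by simp
        ultimately have "min (\<phi>0 r s) (c*r) \<le> min (\<phi>0 r' s) (c*r')" using mono[of r r' s] c
          by (intro min.mono) auto
        moreover have "r * exp (-s) < r' * exp (-s)" using \<open>r < r'\<close> by simp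
        ultimately show "\<phi> r s < \<phi> r' s" unfolding \<phi>_def by (rule add_le_less_mono)
      qed
    qed
  next
    fix r :: real assume r: "0 \<le> r"
    show "antimono_on {0..} (\<phi> r)"
    proof (rule monotone_onI)
      fix s s' :: real assume "s \<in> {0..}" "s' \<in> {0..}" "s \<le> s'"
      then have "min (\<phi>0 r s') (c*r) \<le> min (\<phi>0 r s) (c*r)" using anti[of s s' r] by (auto simp: min_def)
      moreover have "r * exp (-s') \<le> r * exp (-s)" using \<open>s \<le> s'\<close> r by (simp add: mult_left_mono)
      ultimately show "\<phi> r s' \<le> \<phi> r s" by (simp add: \<phi>_def)
    qed
    show "(\<phi> r \<longlongrightarrow> 0) at_top"
    proof (rule order_tendstoI)
      fix a :: real assume "a < 0"
      then show "\<forall>\<^sub>F s in at_top. a < \<phi> r s"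
        using phi0_nn r c by (intro always_eventually allI) (simp add: \<phi>_def, smt (verit) exp_gt_zero mult_nonneg_nonneg)
    next
      fix b :: real assume b: "0 < b"
      obtain S where S: "\<forall>s\<ge>S. \<phi>0 r s \<le> b/2" using decay[OF r, of "b/2"] b by auto
      show "\<forall>\<^sub>F s in at_top. \<phi> r s < b"
        unfolding eventually_at_top_linorder
      proof (intro exI[of _ "max (max S 0) (2*r/b + 1)"] allI impI)
        fix s assume sS: "max (max S 0) (2*r/b + 1) \<le> s"
        have "exp s \<ge> 1 + s" by (rule exp_ge_add_one_self)
        then have "r * (1 + s) \<le> r * exp s" using r by (rule mult_left_mono)
        then have "r * exp (-s) \<le> r / (1 + s)" using r sS
          by (simp add: exp_minus divide_simps)
        also have "\<dots> < b/2"
        proof -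
          have "2*r/b < s" using sS by simp
          then have "2*r < s * b" using b by (simp add: field_simps)
          then show ?thesis using b sS by (simp add: field_simps)
        qed
        finally have "r * exp (-s) < b/2" .
        moreover have "\<phi>0 r s \<le> b/2" using S sS by simp
        ultimately show "\<phi> r s < b" by (simp add: \<phi>_def min_def)
      qed
    qed
  qed
  show ?thesis
  proof (intro exI[of _ \<phi>] conjI KL allI impI)
    fix r s u :: real assume r: "0 \<le> r" and s: "0 \<le> s"
      and h: "0 \<le> u \<and> u \<le> c * r \<and> (\<forall>\<mu>>0. T r \<mu> \<le> s \<longrightarrow> u \<le> g \<mu>)"
    then have "(r,s,u) \<in> P" by (auto simp: P_def)
    then have "u \<le> \<phi>0 r s" by (rule phi0_ge)
    then have "u \<le> min (\<phi>0 r s) (c*r)" using h by simp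
    moreover have "0 \<le> r * exp (-s)" using r by simp
    ultimately show "u \<le> \<phi> r s" unfolding \<phi>_def by linarith
  qed
qed

lemma comp_deriv:
  fixes x :: "real \<Rightarrow> real^'n::finite"
  assumes "(x has_vector_derivative x') F"
  shows "((\<lambda>t. x t $ j) has_real_derivative x' $ j) F"
  using bounded_linear.has_vector_derivative[OF bounded_linear_vec_nth assms]
  by (simp add: has_real_derivative_iff_has_vector_derivative)

lemma frechet_axis_sum:
  fixes h :: "real^'n::finite \<Rightarrow> real"
  assumes "h differentiable (at y)"
  shows "frechet_derivative h (at y) v = (\<Sum>i\<in>UNIV. v $ i * pderiv_k h i y)"
proof -
  have "(h has_derivative frechet_derivative h (at y)) (at y)"
    using assms frechet_derivative_works by blast
  then have lin: "linear (frechet_derivative h (at y))"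
    using has_derivative_linear by blast
  have "v = (\<Sum>i\<in>UNIV. v $ i *\<^sub>R axis i 1)"
    using basis_expansion[of v] by (simp add: scalar_mult_eq_scaleR)
  then have "frechet_derivative h (at y) v = frechet_derivative h (at y) (\<Sum>i\<in>UNIV. v $ i *\<^sub>R axis i 1)"
    by simp
  also have "\<dots> = (\<Sum>i\<in>UNIV. v $ i * frechet_derivative h (at y) (axis i 1))"
    using lin by (simp add: linear_sum linear_scale)
  finally show ?thesis by (simp add: pderiv_k_def)
qed

lemma chain_pd:
  fixes h :: "real^'n::finite \<Rightarrow> real" and x :: "real \<Rightarrow> real^'n"
  assumes dh: "h differentiable (at (x t))" and dx: "(x has_vector_derivative x') (at t within S)"
  shows "((\<lambda>t. h (x t)) has_real_derivative (\<Sum>i\<in>UNIV. x' $ i * pderiv_k h i (x t))) (at t within S)"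
proof -
  have hd: "(h has_derivative frechet_derivative h (at (x t))) (at (x t))"
    using dh frechet_derivative_works by blast
  have xd: "(x has_derivative (\<lambda>s. s *\<^sub>R x')) (at t within S)"
    using dx by (simp add: has_vector_derivative_def)
  have "((\<lambda>t. h (x t)) has_derivative (\<lambda>s. frechet_derivative h (at (x t)) (s *\<^sub>R x'))) (at t within S)"
    using has_derivative_compose[OF xd hd] by (simp add: o_def)
  moreover have lin: "linear (frechet_derivative h (at (x t)))"
    using hd has_derivative_linear by blast
  ultimately have "((\<lambda>t. h (x t)) has_derivative (\<lambda>s. s * frechet_derivative h (at (x t)) x')) (at t within S)"
    by (simp add: linear_scale)
  then have "((\<lambda>t. h (x t)) has_real_derivative frechet_derivative h (at (x t)) x') (at t within S)"
    unfolding has_field_derivative_def by (simp add: mult.commute[of _ "frechet_derivative h (at (x t)) x'"])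
  then show ?thesis using frechet_axis_sum[OF dh] by simp
qed

lemma pderiv_sum:
  fixes f :: "'j \<Rightarrow> real^'n::finite \<Rightarrow> real"
  assumes fin: "finite J" and d: "\<forall>j\<in>J. f j differentiable (at y)"
  shows "pderiv_k (\<lambda>z. \<Sum>j\<in>J. f j z) k y = (\<Sum>j\<in>J. pderiv_k (f j) k y)"
proof -
  have "\<forall>j\<in>J. (f j has_derivative frechet_derivative (f j) (at y)) (at y)"
    using d frechet_derivative_works by blast
  then have "((\<lambda>z. \<Sum>j\<in>J. f j z) has_derivative (\<lambda>v. \<Sum>j\<in>J. frechet_derivative (f j) (at y) v)) (at y)"
    by (intro has_derivative_sum) auto
  then have "frechet_derivative (\<lambda>z. \<Sum>j\<in>J. f j z) (at y) = (\<lambda>v. \<Sum>j\<in>J. frechet_derivative (f j) (at y) v)"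
    using frechet_derivative_at by metis
  then show ?thesis by (simp add: pderiv_k_def)
qed

lemma pderiv_nodep:
  fixes h :: "real^'n::finite \<Rightarrow> real"
  assumes nd: "\<not> depends_on h k" and d: "h differentiable (at y)"
  shows "pderiv_k h k y = 0"
proof -
  have hd: "(h has_derivative frechet_derivative h (at y)) (at y)"
    using d frechet_derivative_works by blast
  have ld: "((\<lambda>s::real. y + s *\<^sub>R axis k 1) has_derivative (\<lambda>s. s *\<^sub>R axis k 1)) (at 0)"
    by (intro derivative_eq_intros) auto
  have "((\<lambda>s. h (y + s *\<^sub>R axis k 1)) has_derivative (\<lambda>s. frechet_derivative h (at y) (s *\<^sub>R axis k 1))) (at 0)"
    using has_derivative_compose[OF ld] hd by (simp add: o_def)
  moreover have "\<And>s. h (y + s *\<^sub>R axis k 1) = h y"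
  proof -
    fix s
    have "y + s *\<^sub>R axis k 1 = (\<chi> i. if i = k then y $ k + s else y $ i)"
      by (vector axis_def)
    then show "h (y + s *\<^sub>R axis k 1) = h y"
      using nd unfolding depends_on_def by metis
  qed
  ultimately have "((\<lambda>s. h y) has_derivative (\<lambda>s. frechet_derivative h (at y) (s *\<^sub>R axis k 1))) (at (0::real))"
    by simp
  moreover have "((\<lambda>s. h y) has_derivative (\<lambda>s. 0)) (at (0::real))" by simp
  ultimately have "(\<lambda>s. frechet_derivative h (at y) (s *\<^sub>R axis k 1)) = (\<lambda>s. 0)"
    using has_derivative_unique by blast
  then have "frechet_derivative h (at y) (1 *\<^sub>R axis k 1) = 0" by metis
  then show ?thesis by (simp add: pderiv_k_def)
qed

lemma pderiv_min:
  fixes h :: "real^'n::finite \<Rightarrow> real"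
  assumes d: "h differentiable (at y)" and m: "\<forall>z. h y \<le> h z"
  shows "pderiv_k h k y = 0"
proof -
  have hd: "(h has_derivative frechet_derivative h (at y)) (at y)"
    using d frechet_derivative_works by blast
  have "frechet_derivative h (at y) = (\<lambda>h. 0)"
    by (rule has_derivative_local_min[OF hd]) (use m in auto)
  then show ?thesis by (simp add: pderiv_k_def)
qed

lemma parseval_aux:
  fixes V :: "'n::finite set" and R :: "nat \<Rightarrow> 'n \<Rightarrow> real" and y :: "'n \<Rightarrow> real"
  assumes N: "card V \<ge> 1"
  and orth: "\<forall>i < card V - 1. \<forall>i' < card V - 1. (\<Sum>j\<in>V. R i j * R i' j) = (if i = i' then 1 else 0)"
  and perp: "\<forall>i < card V - 1. (\<Sum>j\<in>V. R i j) = 0"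
  shows "(\<Sum>i<card V - 1. (\<Sum>j\<in>V. R i j * y j)\<^sup>2) + (\<Sum>j\<in>V. y j)\<^sup>2 / card V = (\<Sum>j\<in>V. (y j)\<^sup>2)"
proof -
  define N where "N = card V"
  define u :: "nat \<Rightarrow> real^'n" where
    "u = (\<lambda>i. \<chi> j. if j \<in> V then (if i < N - 1 then R i j else 1 / sqrt N) else 0)"
  define Y :: "real^'n" where "Y = (\<chi> j. if j \<in> V then y j else 0)"
  have Npos: "N \<ge> 1" using N by (simp add: N_def)
  have inner_sum: "\<And>a b :: real^'n. (\<forall>j. j \<notin> V \<longrightarrow> a $ j = 0) \<Longrightarrow> a \<bullet> b = (\<Sum>j\<in>V. a $ j * b $ j)"
  proof -
    fix a b :: "real^'n" assume "\<forall>j. j \<notin> V \<longrightarrow> a $ j = 0"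
    then have "a \<bullet> b = (\<Sum>j\<in>UNIV. if j \<in> V then a $ j * b $ j else 0)"
      unfolding inner_vec_def by (intro sum.cong) auto
    also have "\<dots> = (\<Sum>j\<in>V. a $ j * b $ j)" by (simp add: sum.If_cases)
    finally show "a \<bullet> b = (\<Sum>j\<in>V. a $ j * b $ j)" .
  qed
  have usupp: "\<And>i. \<forall>j. j \<notin> V \<longrightarrow> u i $ j = 0" by (simp add: u_def)
  have sV: "(\<Sum>j\<in>V. (1::real)) = N" by (simp add: N_def)
  have uu: "\<And>i i'. i < N \<Longrightarrow> i' < N \<Longrightarrow> u i \<bullet> u i' = (if i = i' then 1 else 0)"
  proof -
    fix i i' assume i: "i < N" and i': "i' < N"
    have e: "u i \<bullet> u i' = (\<Sum>j\<in>V. u i $ j * u i' $ j)" by (rule inner_sum[OF usupp])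
    show "u i \<bullet> u i' = (if i = i' then 1 else 0)"
    proof (cases "i < N - 1")
      case True note it = True
      show ?thesis
      proof (cases "i' < N - 1")
        case True
        then show ?thesis using e it orth by (simp add: u_def N_def)
      next
        case False
        then have "u i \<bullet> u i' = (\<Sum>j\<in>V. R i j) / sqrt N" using e it
          by (simp add: u_def sum_divide_distrib)
        then show ?thesis using perp it False by (simp add: N_def)
      qed
    next
      case False note it = False
      show ?thesis
      proof (cases "i' < N - 1")
        case True
        then have "u i \<bullet> u i' = (\<Sum>j\<in>V. R i' j) / sqrt N" using e it
          by (simp add: u_def sum_divide_distrib mult.commute)
        then show ?thesis using perp it True by (simp add: N_def)
      next
        case False
        then have "i = i'" using it i i' by simp
        have "u i \<bullet> u i' = (\<Sum>j\<in>V. (1 / sqrt N)^2)" using e it False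
          by (simp add: u_def power2_eq_square)
        also have "\<dots> = N * (1/N)" using Npos by (simp add: N_def power_divide)
        finally show ?thesis using Npos \<open>i = i'\<close> by simp
      qed
    qed
  qed
  have uinj: "inj_on u {..<N}"
  proof (rule inj_onI)
    fix a b assume a: "a \<in> {..<N}" and b: "b \<in> {..<N}" and ab: "u a = u b"
    show "a = b"
    proof (rule ccontr)
      assume "a \<noteq> b"
      then have "u a \<bullet> u b = 0" using uu a b by simp
      moreover have "u a \<bullet> u a = 1" using uu a by simp
      ultimately show False using ab by simp
    qed
  qed
  define U where "U = u ` {..<N}"
  have cardU: "card U = N" unfolding U_def using card_image[OF uinj] by simp
  have U0: "0 \<notin> U" unfolding U_def using uu by force
  have Uorth: "pairwise orthogonal U"
    unfolding pairwise_def orthogonal_def U_def using uu by force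
  have Uind: "independent U" using pairwise_orthogonal_independent[OF Uorth U0] .
  define S where "S = {x::real^'n. \<forall>i\<in>Basis. i \<notin> (\<lambda>j. axis j 1) ` V \<longrightarrow> x \<bullet> i = 0}"
  have dimS: "dim S = card ((\<lambda>j. axis j (1::real)) ` V)" unfolding S_def
    by (rule dim_substandard) (auto simp: Basis_vec_def)
  have "inj_on (\<lambda>j. axis j (1::real)) V" by (rule inj_onI) (simp add: axis_eq_axis)
  then have dimS': "dim S = N" using dimS by (simp add: card_image N_def)
  have memS: "\<And>x::real^'n. (\<forall>j. j \<notin> V \<longrightarrow> x $ j = 0) \<Longrightarrow> x \<in> S"
    unfolding S_def by (auto simp: Basis_vec_def inner_axis)
  have US: "U \<subseteq> S" unfolding U_def using memS usupp by blast
  have "S \<subseteq> span U" using eucl.card_eq_dim[OF US] cardU dimS' Uind U_def by simp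
  moreover have YS: "Y \<in> S" by (rule memS) (simp add: Y_def)
  ultimately have Yspan: "Y \<in> span U" by blast
  define Z where "Z = Y - (\<Sum>i<N. (u i \<bullet> Y) *\<^sub>R u i)"
  have Zorth: "\<And>i. i < N \<Longrightarrow> u i \<bullet> Z = 0"
  proof -
    fix i assume i: "i < N"
    have "u i \<bullet> (\<Sum>i'<N. (u i' \<bullet> Y) *\<^sub>R u i') = (\<Sum>i'<N. (u i' \<bullet> Y) * (u i \<bullet> u i'))"
      by (simp add: inner_sum_right)
    also have "\<dots> = (\<Sum>i'<N. if i' = i then u i \<bullet> Y else 0)"
      using uu i by (intro sum.cong) auto
    also have "\<dots> = u i \<bullet> Y" using i by simp
    finally show "u i \<bullet> Z = 0" by (simp add: Z_def inner_diff_right)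
  qed
  have "\<And>v. v \<in> U \<Longrightarrow> orthogonal Z v"
    unfolding U_def orthogonal_def using Zorth by (auto simp: inner_commute)
  then have oZ: "\<And>a. a \<in> span U \<Longrightarrow> orthogonal Z a" using orthogonal_to_span by blast
  have "(\<Sum>i<N. (u i \<bullet> Y) *\<^sub>R u i) \<in> span U"
    unfolding U_def by (intro span_sum span_mul span_base) auto
  then have "Z \<in> span U" unfolding Z_def using Yspan span_diff by blast
  then have "Z \<bullet> Z = 0" using oZ orthogonal_def by blast
  then have "Z = 0" by simp
  then have YY: "Y = (\<Sum>i<N. (u i \<bullet> Y) *\<^sub>R u i)" unfolding Z_def by simp
  have "Y \<bullet> Y = (\<Sum>i<N. (u i \<bullet> Y) *\<^sub>R u i) \<bullet> Y" using YY by simp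
  also have "\<dots> = (\<Sum>i<N. (u i \<bullet> Y) * (u i \<bullet> Y))"
    by (simp add: inner_sum_left)
  also have "\<dots> = (\<Sum>i<N. (u i \<bullet> Y)\<^sup>2)" by (simp add: power2_eq_square)
  also have "\<dots> = (\<Sum>i<N - 1. (u i \<bullet> Y)\<^sup>2) + (u (N - 1) \<bullet> Y)\<^sup>2"
  proof -
    have "{..<N} = insert (N - 1) {..<N - 1}" using Npos by auto
    then show ?thesis by simp
  qed
  finally have main: "Y \<bullet> Y = (\<Sum>i<N - 1. (u i \<bullet> Y)\<^sup>2) + (u (N - 1) \<bullet> Y)\<^sup>2" .
  have YY2: "Y \<bullet> Y = (\<Sum>j\<in>V. (y j)\<^sup>2)"
    using inner_sum[of Y Y] by (simp add: Y_def power2_eq_square)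
  have uiY: "\<And>i. i < N - 1 \<Longrightarrow> u i \<bullet> Y = (\<Sum>j\<in>V. R i j * y j)"
    using inner_sum[OF usupp] by (simp add: u_def Y_def)
  have ulast: "u (N - 1) \<bullet> Y = (\<Sum>j\<in>V. y j) / sqrt N"
    using inner_sum[OF usupp, of "N - 1" Y] by (simp add: u_def Y_def sum_divide_distrib)
  have "(u (N - 1) \<bullet> Y)\<^sup>2 = ((\<Sum>j\<in>V. y j) / sqrt N)\<^sup>2"
    by (simp only: ulast)
  also have "\<dots> = (\<Sum>j\<in>V. y j)\<^sup>2 / N" by (simp add: power_divide)
  finally have "(u (N - 1) \<bullet> Y)\<^sup>2 = (\<Sum>j\<in>V. y j)\<^sup>2 / N" .
  then show ?thesis using main YY2 uiY by (simp add: N_def)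
qed

lemma conn_const:
  fixes a :: "'n \<Rightarrow> 'n \<Rightarrow> real" and z :: "'n \<Rightarrow> real"
  assumes conn: "induced_connected a V"
  and eq: "\<forall>j\<in>V. \<forall>l\<in>V. a j l > 0 \<longrightarrow> z j = z l"
  shows "\<forall>j\<in>V. \<forall>l\<in>V. z j = z l"
proof (intro ballI)
  fix j l assume j: "j \<in> V" and l: "l \<in> V"
  have "(j, l) \<in> {(p, q). p \<in> V \<and> q \<in> V \<and> a p q > 0}\<^sup>*" using conn j l by (auto simp: induced_connected_def)
  then show "z j = z l"
  proof (induction rule: rtrancl_induct)
    case base then show ?case by simp
  next
    case (step p q) then show ?case using eq by auto
  qed
qed

lemma lap_bound:
  fixes a :: "'n::finite \<Rightarrow> 'n \<Rightarrow> real" and Vs :: "'n \<Rightarrow> 'n set"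
  assumes a_nonneg: "\<forall>j l. a j l \<ge> 0"
  and conn: "\<forall>k. induced_connected a (Vs k)"
  shows "\<exists>lm>0. \<forall>\<epsilon> :: 'n \<Rightarrow> 'n \<Rightarrow> real. (\<forall>k. (\<Sum>j\<in>Vs k. \<epsilon> j k) = 0) \<longrightarrow>
     lm * (\<Sum>k\<in>UNIV. \<Sum>j\<in>Vs k. (\<epsilon> j k)\<^sup>2) \<le> (\<Sum>k\<in>UNIV. \<Sum>j\<in>Vs k. \<Sum>l\<in>Vs k. a j l * (\<epsilon> j k - \<epsilon> l k)\<^sup>2)"
proof -
  define Q :: "real^('n\<times>'n) \<Rightarrow> real" where
    "Q = (\<lambda>y. \<Sum>k\<in>UNIV. \<Sum>j\<in>Vs k. \<Sum>l\<in>Vs k. a j l * (y$(j,k) - y$(l,k))\<^sup>2)"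
  define E :: "real^('n\<times>'n) \<Rightarrow> real" where
    "E = (\<lambda>y. \<Sum>k\<in>UNIV. \<Sum>j\<in>Vs k. (y$(j,k))\<^sup>2)"
  define C where "C = {y::real^('n\<times>'n). (\<forall>j. \<forall>k. (if j \<in> Vs k then 0 else y$(j,k)) = 0) \<and> (\<forall>k. (\<Sum>j\<in>Vs k. y$(j,k)) = 0) \<and> E y = 1}"
  define K where "K = cbox (-1) 1 \<inter> C"
  have Qnn: "\<And>y. 0 \<le> Q y" unfolding Q_def using a_nonneg by (intro sum_nonneg) auto
  have cj: "\<And>j k. continuous_on UNIV (\<lambda>x::real^('n\<times>'n). if j \<in> Vs k then 0 else x $ (j,k))"
  proof -
    fix j k show "continuous_on UNIV (\<lambda>x::real^('n\<times>'n). if j \<in> Vs k then 0 else x $ (j,k))"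
      by (cases "j \<in> Vs k") (auto intro!: continuous_intros)
  qed
  have closedC: "closed C" unfolding C_def E_def
    by (intro closed_Collect_conj closed_Collect_all closed_Collect_eq continuous_intros cj)
  have KC: "K = C"
  proof -
    have "C \<subseteq> cbox (-1) 1"
    proof
      fix y assume y: "y \<in> C"
      show "y \<in> cbox (-1) 1" unfolding mem_box_cart
      proof
        fix p :: "'n \<times> 'n"
        obtain j k where p: "p = (j,k)" by (cases p) auto
        show "(-1) $ p \<le> y $ p \<and> y $ p \<le> 1 $ p"
        proof (cases "j \<in> Vs k")
          case False
          have "(if j \<in> Vs k then 0 else y$(j,k)) = 0" using y by (simp only: C_def mem_Collect_eq)
          then have "y$(j,k) = 0" using False by simp
          then show ?thesis using p by simp
        next
          case True
          have "(y$(j,k))\<^sup>2 \<le> (\<Sum>j\<in>Vs k. (y$(j,k))\<^sup>2)" using True by (intro member_le_sum) auto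
          also have "\<dots> \<le> E y" unfolding E_def by (intro member_le_sum) (auto intro: sum_nonneg)
          finally have "(y$(j,k))\<^sup>2 \<le> 1" using y by (simp add: C_def)
          then have "\<bar>y$(j,k)\<bar> \<le> 1" by (metis abs_le_square_iff abs_one one_power2)
          then show ?thesis using p by auto
        qed
      qed
    qed
    then show ?thesis unfolding K_def by auto
  qed
  have compK: "compact K" unfolding K_def using closedC by (intro compact_Int_closed) auto
  have Qpos: "\<And>y. y \<in> K \<Longrightarrow> Q y > 0"
  proof (rule ccontr)
    fix y assume yK: "y \<in> K" and "\<not> Q y > 0"
    then have Q0: "Q y = 0" using Qnn[of y] by simp
    have allk: "\<And>k. (\<Sum>j\<in>Vs k. \<Sum>l\<in>Vs k. a j l * (y$(j,k) - y$(l,k))\<^sup>2) = 0"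
    proof -
      fix k
      have "\<forall>k\<in>UNIV. (\<Sum>j\<in>Vs k. \<Sum>l\<in>Vs k. a j l * (y$(j,k) - y$(l,k))\<^sup>2) = 0"
        using Q0 unfolding Q_def
        by (subst sum_nonneg_eq_0_iff[symmetric]) (auto intro!: sum_nonneg simp: a_nonneg)
      then show "(\<Sum>j\<in>Vs k. \<Sum>l\<in>Vs k. a j l * (y$(j,k) - y$(l,k))\<^sup>2) = 0" by simp
    qed
    have zero: "\<And>k j. j \<in> Vs k \<Longrightarrow> y$(j,k) = 0"
    proof -
      fix k j assume jk: "j \<in> Vs k"
      have terms: "\<forall>j\<in>Vs k. \<forall>l\<in>Vs k. a j l * (y$(j,k) - y$(l,k))\<^sup>2 = 0"
      proof -
        have "\<forall>j\<in>Vs k. (\<Sum>l\<in>Vs k. a j l * (y$(j,k) - y$(l,k))\<^sup>2) = 0"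
          using allk[of k] by (subst sum_nonneg_eq_0_iff[symmetric]) (auto intro!: sum_nonneg simp: a_nonneg)
        then show ?thesis
          by (subst (asm) sum_nonneg_eq_0_iff) (auto simp: a_nonneg)
      qed
      have "\<forall>j\<in>Vs k. \<forall>l\<in>Vs k. a j l > 0 \<longrightarrow> y$(j,k) = y$(l,k)"
      proof (intro ballI impI)
        fix j l assume "j \<in> Vs k" "l \<in> Vs k" "0 < a j l"
        then have "a j l * (y$(j,k) - y$(l,k))\<^sup>2 = 0" using terms by blast
        then have "(y$(j,k) - y$(l,k))\<^sup>2 = 0" using \<open>0 < a j l\<close> by simp
        then show "y$(j,k) = y$(l,k)" by simp
      qed
      then have eqs: "\<forall>j\<in>Vs k. \<forall>l\<in>Vs k. y$(j,k) = y$(l,k)"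
        using conn_const[of a "Vs k" "\<lambda>j. y$(j,k)"] conn by blast
      have "(\<Sum>l\<in>Vs k. y$(l,k)) = (\<Sum>l\<in>Vs k. y$(j,k))"
      proof (rule sum.cong[OF refl])
        fix l assume "l \<in> Vs k" then show "y$(l,k) = y$(j,k)" using eqs jk by blast
      qed
      also have "\<dots> = card (Vs k) * y$(j,k)" by simp
      finally have "card (Vs k) * y$(j,k) = (\<Sum>l\<in>Vs k. y$(l,k))" by simp
      moreover have "(\<Sum>l\<in>Vs k. y$(l,k)) = 0" using yK KC by (simp only: C_def mem_Collect_eq)
      ultimately have "card (Vs k) * y$(j,k) = 0" by simp
      moreover have "card (Vs k) > 0" using jk by (auto simp: card_gt_0_iff)
      ultimately show "y$(j,k) = 0" by (metis card.empty less_irrefl mult_eq_0_iff of_nat_eq_0_iff)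
    qed
    have "E y = 0" unfolding E_def using zero by simp
    moreover have "E y = 1" using yK KC by (simp only: C_def mem_Collect_eq)
    ultimately show False by simp
  qed
  obtain lm where lam: "lm > 0" "\<forall>y\<in>K. lm \<le> Q y"
  proof (cases "K = {}")
    case True then show ?thesis using that[of 1] by auto
  next
    case False
    have "continuous_on K Q" unfolding Q_def by (intro continuous_intros)
    then obtain y0 where "y0 \<in> K" "\<forall>y\<in>K. Q y0 \<le> Q y"
      using continuous_attains_inf[OF compK False] by blast
    then show ?thesis using that[of "Q y0"] Qpos by auto
  qed
  show ?thesis
  proof (intro exI[of _ lm] conjI allI impI lam(1))
    fix \<epsilon> :: "'n \<Rightarrow> 'n \<Rightarrow> real" assume sum0: "\<forall>k. (\<Sum>j\<in>Vs k. \<epsilon> j k) = 0"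
    define y :: "real^('n\<times>'n)" where "y = (\<chi> p. if fst p \<in> Vs (snd p) then \<epsilon> (fst p) (snd p) else 0)"
    have Ey: "E y = (\<Sum>k\<in>UNIV. \<Sum>j\<in>Vs k. (\<epsilon> j k)\<^sup>2)" unfolding E_def y_def
      by (intro sum.cong refl) auto
    have Qy: "Q y = (\<Sum>k\<in>UNIV. \<Sum>j\<in>Vs k. \<Sum>l\<in>Vs k. a j l * (\<epsilon> j k - \<epsilon> l k)\<^sup>2)" unfolding Q_def y_def
      by (intro sum.cong refl) auto
    show "lm * (\<Sum>k\<in>UNIV. \<Sum>j\<in>Vs k. (\<epsilon> j k)\<^sup>2) \<le> (\<Sum>k\<in>UNIV. \<Sum>j\<in>Vs k. \<Sum>l\<in>Vs k. a j l * (\<epsilon> j k - \<epsilon> l k)\<^sup>2)"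
    proof (cases "E y = 0")
      case True then show ?thesis using Ey Qy Qnn[of y] by simp
    next
      case False
      have Enn: "E y \<ge> 0" unfolding E_def by (intro sum_nonneg) auto
      then have Epos: "E y > 0" using False by simp
      define s where "s = sqrt (E y)"
      have s: "s > 0" "s\<^sup>2 = E y" using Epos by (auto simp: s_def)
      define y' where "y' = (1/s) *\<^sub>R y"
      have Ey': "E y' = E y / s\<^sup>2" unfolding E_def y'_def
        by (simp add: power_divide sum_divide_distrib)
      have Qy': "Q y' = Q y / s\<^sup>2" unfolding Q_def y'_def
      proof -
        have "\<And>j k l. a j l * ((1/s) * y$(j,k) - (1/s) * y$(l,k))\<^sup>2 = a j l * (y$(j,k) - y$(l,k))\<^sup>2 / s\<^sup>2"
        proof -
          fix j k l
          have "(1/s) * y$(j,k) - (1/s) * y$(l,k) = (y$(j,k) - y$(l,k)) / s" by (simp add: diff_divide_distrib)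
          then show "a j l * ((1/s) * y$(j,k) - (1/s) * y$(l,k))\<^sup>2 = a j l * (y$(j,k) - y$(l,k))\<^sup>2 / s\<^sup>2"
            by (simp add: power_divide)
        qed
        then show "(\<Sum>k\<in>UNIV. \<Sum>j\<in>Vs k. \<Sum>l\<in>Vs k. a j l * (((1 / s) *\<^sub>R y) $ (j, k) - ((1 / s) *\<^sub>R y) $ (l, k))\<^sup>2) =
           (\<Sum>k\<in>UNIV. \<Sum>j\<in>Vs k. \<Sum>l\<in>Vs k. a j l * (y $ (j, k) - y $ (l, k))\<^sup>2) / s\<^sup>2"
          by (simp add: sum_divide_distrib)
      qed
      have "y' \<in> C" unfolding C_def
      proof (intro CollectI conjI allI)
        fix j k show "(if j \<in> Vs k then 0 else y'$(j,k)) = 0" by (simp add: y'_def y_def)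
      next
        fix k
        have "(\<Sum>j\<in>Vs k. y'$(j,k)) = (1/s) * (\<Sum>j\<in>Vs k. \<epsilon> j k)"
          by (simp add: y'_def y_def sum_distrib_left)
        then show "(\<Sum>j\<in>Vs k. y'$(j,k)) = 0" using sum0 by simp
      next
        show "E y' = 1" using Ey' s Epos by simp
      qed
      then have "lm \<le> Q y'" using lam KC by auto
      then have "lm \<le> Q y / E y" using Qy' s by simp
      then have "lm * E y \<le> Q y" using Epos by (simp add: field_simps)
      then show ?thesis using Ey Qy by simp
    qed
  qed
qed

lemma sum_le_card_mult:
  fixes f :: "'n::finite \<Rightarrow> real"
  assumes "\<forall>j\<in>A. f j \<le> M" "M \<ge> 0"
  shows "(\<Sum>j\<in>A. f j) \<le> real CARD('n) * M"
proof -
  have "(\<Sum>j\<in>A. f j) \<le> (\<Sum>j\<in>A. M)" using assms by (intro sum_mono) auto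
  also have "\<dots> = card A * M" by simp
  also have "\<dots> \<le> CARD('n) * M"
  proof -
    have "card A \<le> CARD('n)" by (rule card_mono) auto
    then show ?thesis using assms(2) by (intro mult_right_mono) auto
  qed
  finally show ?thesis .
qed

lemma sym_sum:
  fixes a :: "'n \<Rightarrow> 'n \<Rightarrow> real" and z :: "'n \<Rightarrow> real"
  assumes a_sym: "\<forall>j l. a j l = a l j" and fin: "finite A"
  shows "(\<Sum>j\<in>A. z j * (\<Sum>l\<in>A. a j l * (z j - z l))) = (\<Sum>j\<in>A. \<Sum>l\<in>A. a j l * (z j - z l)\<^sup>2) / 2"
proof -
  have 1: "(\<Sum>j\<in>A. z j * (\<Sum>l\<in>A. a j l * (z j - z l))) = (\<Sum>j\<in>A. \<Sum>l\<in>A. a j l * z j * (z j - z l))"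
    by (simp add: sum_distrib_left mult_ac)
  have 2: "(\<Sum>j\<in>A. \<Sum>l\<in>A. a j l * z j * (z j - z l)) = (\<Sum>j\<in>A. \<Sum>l\<in>A. a j l * z l * (z l - z j))"
    by (subst sum.swap) (simp add: a_sym)
  have 3: "(\<Sum>j\<in>A. \<Sum>l\<in>A. a j l * (z j - z l)\<^sup>2) =
       (\<Sum>j\<in>A. \<Sum>l\<in>A. a j l * z j * (z j - z l)) + (\<Sum>j\<in>A. \<Sum>l\<in>A. a j l * z l * (z l - z j))"
    by (simp add: sum.distrib[symmetric] power2_eq_square algebra_simps)
  show ?thesis using 1 2 3 by simp
qed

lemma sum_dev_zero:
  fixes y :: "'n \<Rightarrow> real"
  assumes "finite A" "card A \<ge> 1"
  shows "(\<Sum>j\<in>A. y j - (\<Sum>l\<in>A. y l) / card A) = 0"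
  using assms by (simp add: sum_subtractf)

lemma sum_lin_aux:
  fixes u v :: "'n \<Rightarrow> real"
  shows "(\<Sum>j\<in>A. 2 * u j * (v j - c)) = 2 * (\<Sum>j\<in>A. u j * v j) - 2 * ((\<Sum>j\<in>A. u j) * c)"
proof -
  have "(\<Sum>j\<in>A. 2 * u j * (v j - c)) = (\<Sum>j\<in>A. 2 * (u j * v j) - 2 * (u j * c))"
    by (intro sum.cong) (auto simp: algebra_simps)
  also have "\<dots> = 2 * (\<Sum>j\<in>A. u j * v j) - 2 * (\<Sum>j\<in>A. u j * c)"
    by (simp add: sum_subtractf sum_distrib_left)
  also have "(\<Sum>j\<in>A. u j * c) = (\<Sum>j\<in>A. u j) * c" by (simp add: sum_distrib_right)
  finally show ?thesis .
qed

lemma alg_bound: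
  fixes V :: "'n::finite \<Rightarrow> 'n set" and gg hh :: "'n \<Rightarrow> 'n \<Rightarrow> real"
    and e pF d :: "'n \<Rightarrow> real" and a :: "'n \<Rightarrow> 'n \<Rightarrow> real"
  assumes a_sym: "\<forall>j l. a j l = a l j"
  and Vk: "\<forall>k. k \<in> V k"
  and lap: "\<forall>\<epsilon> :: 'n \<Rightarrow> 'n \<Rightarrow> real. (\<forall>k. (\<Sum>j\<in>V k. \<epsilon> j k) = 0) \<longrightarrow>
     lm * (\<Sum>k\<in>UNIV. \<Sum>j\<in>V k. (\<epsilon> j k)\<^sup>2) \<le> (\<Sum>k\<in>UNIV. \<Sum>j\<in>V k. \<Sum>l\<in>V k. a j l * (\<epsilon> j k - \<epsilon> l k)\<^sup>2)"
  and lm: "lm > 0" and dl: "0 < \<delta>" "\<delta> \<le> 1"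
  and d: "\<forall>j. d j > 0" "\<forall>j. d j \<le> Dm"
  and pF: "\<forall>j. (\<Sum>l\<in>V j. gg l j) = pF j" "\<forall>j. \<bar>pF j\<bar> \<le> G"
  and e: "\<forall>j. \<bar>e j\<bar> \<le> \<rho>"
  and Edef: "E = (\<Sum>k\<in>UNIV. \<Sum>j\<in>V k. (gg j k - (\<Sum>l\<in>V k. gg l k) / card (V k))\<^sup>2)"
  and Ebd: "E \<le> \<rho>\<^sup>2"
  and hh: "\<forall>j k. \<bar>hh j k\<bar> \<le> real CARD('n) * \<delta> * Dm * H * (G + sqrt E)"
  and nn: "G \<ge> 0" "H \<ge> 0" "\<rho> \<ge> 0"
  and K1: "K1 = 2 * (real CARD('n))\<^sup>2 * \<rho> + 2 * (real CARD('n))^3 * Dm * H * (G + \<rho>)"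
  shows "(\<Sum>j\<in>UNIV. (card (V j) / d j) * (2 * e j * (- (\<delta> * d j) * gg j j)))
       + (\<Sum>k\<in>UNIV. \<Sum>j\<in>V k. 2 * (gg j k - (\<Sum>l\<in>V k. gg l k) / card (V k)) *
            ((- (\<Sum>l\<in>V k. a j l * (gg j k - gg l k)) + hh j k)
             - (\<Sum>j'\<in>V k. - (\<Sum>l\<in>V k. a j' l * (gg j' k - gg l k)) + hh j' k) / card (V k)))
     \<le> - \<delta> * (2 * (\<Sum>j\<in>UNIV. e j * pF j) + lm / 2 * E) + \<delta>\<^sup>2 * (K1\<^sup>2 / (2 * lm))"
proof -
  define n where "n = real CARD('n)"
  have n1: "n \<ge> 1" unfolding n_def by simp
  define av where "av = (\<lambda>k. (\<Sum>l\<in>V k. gg l k) / card (V k))"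
  define \<epsilon> where "\<epsilon> = (\<lambda>j k. gg j k - av k)"
  define gd where "gd = (\<lambda>j k. - (\<Sum>l\<in>V k. a j l * (gg j k - gg l k)) + hh j k)"
  have cardV: "\<And>k. card (V k) \<ge> 1" using Vk by (metis One_nat_def Suc_leI card_gt_0_iff empty_iff finite)
  have cardVn: "\<And>k. real (card (V k)) \<le> n"
  proof -
    fix k have "card (V k) \<le> CARD('n)" by (rule card_mono) auto
    then show "real (card (V k)) \<le> n" unfolding n_def by simp
  qed
  have eps0: "\<And>k. (\<Sum>j\<in>V k. \<epsilon> j k) = 0"
    unfolding \<epsilon>_def av_def using sum_dev_zero[of "V _" "\<lambda>j. gg j _"] cardV by auto
  have Eeps: "E = (\<Sum>k\<in>UNIV. \<Sum>j\<in>V k. (\<epsilon> j k)\<^sup>2)" unfolding Edef \<epsilon>_def av_def ..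
  have Enn: "E \<ge> 0" unfolding Eeps by (intro sum_nonneg) auto
  define sE where "sE = sqrt E"
  have sE: "sE \<ge> 0" "sE\<^sup>2 = E" "sE \<le> \<rho>" using Enn Ebd nn by (auto simp: sE_def real_sqrt_le_iff intro: real_le_lsqrt)
  have epsbd: "\<And>j k. j \<in> V k \<Longrightarrow> \<bar>\<epsilon> j k\<bar> \<le> sE"
  proof -
    fix j k assume jk: "j \<in> V k"
    have "(\<epsilon> j k)\<^sup>2 \<le> (\<Sum>j\<in>V k. (\<epsilon> j k)\<^sup>2)" using jk by (intro member_le_sum) auto
    also have "\<dots> \<le> E" unfolding Eeps by (intro member_le_sum) (auto intro: sum_nonneg)
    finally show "\<bar>\<epsilon> j k\<bar> \<le> sE" unfolding sE_def by (simp add: real_le_rsqrt)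
  qed
  have part2: "\<And>k. (\<Sum>j\<in>V k. 2 * \<epsilon> j k * (gd j k - (\<Sum>j'\<in>V k. gd j' k) / card (V k)))
      = - (\<Sum>j\<in>V k. \<Sum>l\<in>V k. a j l * (\<epsilon> j k - \<epsilon> l k)\<^sup>2) + 2 * (\<Sum>j\<in>V k. \<epsilon> j k * hh j k)"
  proof -
    fix k
    have "(\<Sum>j\<in>V k. 2 * \<epsilon> j k * (gd j k - (\<Sum>j'\<in>V k. gd j' k) / card (V k)))
        = 2 * (\<Sum>j\<in>V k. \<epsilon> j k * gd j k) - 2 * ((\<Sum>j\<in>V k. \<epsilon> j k) * ((\<Sum>j'\<in>V k. gd j' k) / card (V k)))"
      by (rule sum_lin_aux)
    also have "\<dots> = 2 * (\<Sum>j\<in>V k. \<epsilon> j k * gd j k)" using eps0 by simp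
    also have "(\<Sum>j\<in>V k. \<epsilon> j k * gd j k) = - (\<Sum>j\<in>V k. \<epsilon> j k * (\<Sum>l\<in>V k. a j l * (\<epsilon> j k - \<epsilon> l k))) + (\<Sum>j\<in>V k. \<epsilon> j k * hh j k)"
    proof -
      have "\<And>j. \<epsilon> j k * gd j k = - (\<epsilon> j k * (\<Sum>l\<in>V k. a j l * (\<epsilon> j k - \<epsilon> l k))) + \<epsilon> j k * hh j k"
        by (simp add: gd_def \<epsilon>_def algebra_simps)
      then show ?thesis by (simp add: sum.distrib sum_negf sum_subtractf)
    qed
    also have "(\<Sum>j\<in>V k. \<epsilon> j k * (\<Sum>l\<in>V k. a j l * (\<epsilon> j k - \<epsilon> l k))) = (\<Sum>j\<in>V k. \<Sum>l\<in>V k. a j l * (\<epsilon> j k - \<epsilon> l k)\<^sup>2) / 2"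
      by (rule sym_sum[OF a_sym]) simp
    finally show "(\<Sum>j\<in>V k. 2 * \<epsilon> j k * (gd j k - (\<Sum>j'\<in>V k. gd j' k) / card (V k)))
      = - (\<Sum>j\<in>V k. \<Sum>l\<in>V k. a j l * (\<epsilon> j k - \<epsilon> l k)\<^sup>2) + 2 * (\<Sum>j\<in>V k. \<epsilon> j k * hh j k)" by simp
  qed
  have lapb: "lm * E \<le> (\<Sum>k\<in>UNIV. \<Sum>j\<in>V k. \<Sum>l\<in>V k. a j l * (\<epsilon> j k - \<epsilon> l k)\<^sup>2)"
    using lap eps0 Eeps by auto
  have hb: "\<And>j k. \<bar>hh j k\<bar> \<le> n * \<delta> * Dm * H * (G + \<rho>)"
  proof -
    fix j k
    have "0 \<le> n * \<delta> * Dm * H" using n1 dl d nn by (metis dual_order.trans less_eq_real_def mult_nonneg_nonneg zero_le_one)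
    then have "n * \<delta> * Dm * H * (G + sE) \<le> n * \<delta> * Dm * H * (G + \<rho>)" using sE by (intro mult_left_mono) auto
    moreover have "\<bar>hh j k\<bar> \<le> n * \<delta> * Dm * H * (G + sE)" using hh by (simp add: n_def sE_def)
    ultimately show "\<bar>hh j k\<bar> \<le> n * \<delta> * Dm * H * (G + \<rho>)" by linarith
  qed
  define M where "M = n * \<delta> * Dm * H * (G + \<rho>)"
  have M0: "M \<ge> 0" using hb[of undefined undefined] unfolding M_def by linarith
  have hpart: "(\<Sum>k\<in>UNIV. 2 * (\<Sum>j\<in>V k. \<epsilon> j k * hh j k)) \<le> n * (n * (2 * sE * M))"
  proof -
    have "\<And>k. 2 * (\<Sum>j\<in>V k. \<epsilon> j k * hh j k) \<le> n * (2 * sE * M)"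
    proof -
      fix k
      have "\<forall>j\<in>V k. 2 * (\<epsilon> j k * hh j k) \<le> 2 * sE * M"
      proof
        fix j assume j: "j \<in> V k"
        have "\<bar>\<epsilon> j k * hh j k\<bar> \<le> sE * M" unfolding abs_mult M_def
          using epsbd[OF j] hb[of j k] sE by (intro mult_mono) auto
        then show "2 * (\<epsilon> j k * hh j k) \<le> 2 * sE * M" by (simp add: abs_le_iff)
      qed
      then have "(\<Sum>j\<in>V k. 2 * (\<epsilon> j k * hh j k)) \<le> n * (2 * sE * M)"
        unfolding n_def using sE M0 by (intro sum_le_card_mult) auto
      then show "2 * (\<Sum>j\<in>V k. \<epsilon> j k * hh j k) \<le> n * (2 * sE * M)" by (simp add: sum_distrib_left)
    qed
    then have "(\<Sum>k\<in>UNIV. 2 * (\<Sum>j\<in>V k. \<epsilon> j k * hh j k)) \<le> n * (n * (2 * sE * M))"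
      unfolding n_def using sE M0 n1 by (intro sum_le_card_mult) (auto simp: n_def)
    then show ?thesis .
  qed
  have xpart: "(\<Sum>j\<in>UNIV. (card (V j) / d j) * (2 * e j * (- (\<delta> * d j) * gg j j)))
       = - 2 * \<delta> * (\<Sum>j\<in>UNIV. e j * pF j) - 2 * \<delta> * (\<Sum>j\<in>UNIV. card (V j) * e j * \<epsilon> j j)"
  proof -
    have "\<And>j. (card (V j) / d j) * (2 * e j * (- (\<delta> * d j) * gg j j)) = - 2 * \<delta> * (e j * pF j) - 2 * \<delta> * (card (V j) * e j * \<epsilon> j j)"
    proof -
      fix j
      have "card (V j) * gg j j = pF j + card (V j) * \<epsilon> j j"
        using pF(1) cardV[of j] Vk by (auto simp: \<epsilon>_def av_def algebra_simps)
      moreover have "d j \<noteq> 0" using d by (metis less_irrefl)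
      ultimately show "(card (V j) / d j) * (2 * e j * (- (\<delta> * d j) * gg j j)) = - 2 * \<delta> * (e j * pF j) - 2 * \<delta> * (card (V j) * e j * \<epsilon> j j)"
        by (simp add: field_simps)
    qed
    then show ?thesis by (simp add: sum_subtractf sum_distrib_left)
  qed
  have xcross: "- 2 * \<delta> * (\<Sum>j\<in>UNIV. card (V j) * e j * \<epsilon> j j) \<le> \<delta> * (n * (2 * n * \<rho> * sE))"
  proof -
    have "\<forall>j\<in>UNIV. - (card (V j) * e j * \<epsilon> j j) \<le> n * \<rho> * sE"
    proof
      fix j :: 'n
      have "\<bar>card (V j) * e j * \<epsilon> j j\<bar> \<le> n * \<rho> * sE" unfolding abs_mult
        using cardVn[of j] e epsbd[of j j] Vk sE nn by (intro mult_mono) auto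
      then show "- (card (V j) * e j * \<epsilon> j j) \<le> n * \<rho> * sE" by (simp add: abs_le_iff)
    qed
    then have "(\<Sum>j\<in>UNIV. - (card (V j) * e j * \<epsilon> j j)) \<le> n * (n * \<rho> * sE)"
      unfolding n_def using nn sE n1 by (intro sum_le_card_mult) (auto simp: n_def)
    then have "- (\<Sum>j\<in>UNIV. card (V j) * e j * \<epsilon> j j) \<le> n * (n * \<rho> * sE)" by (simp add: sum_negf)
    then have "2 * \<delta> * (- (\<Sum>j\<in>UNIV. card (V j) * e j * \<epsilon> j j)) \<le> 2 * \<delta> * (n * (n * \<rho> * sE))"
      using dl by (intro mult_left_mono) auto
    moreover have "\<delta> * (n * (2 * n * \<rho> * sE)) = 2 * \<delta> * (n * (n * \<rho> * sE))" by (simp add: mult_ac)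
    ultimately show ?thesis by linarith
  qed
  have LHS: "(\<Sum>j\<in>UNIV. (card (V j) / d j) * (2 * e j * (- (\<delta> * d j) * gg j j)))
       + (\<Sum>k\<in>UNIV. \<Sum>j\<in>V k. 2 * (gg j k - (\<Sum>l\<in>V k. gg l k) / card (V k)) *
            ((- (\<Sum>l\<in>V k. a j l * (gg j k - gg l k)) + hh j k)
             - (\<Sum>j'\<in>V k. - (\<Sum>l\<in>V k. a j' l * (gg j' k - gg l k)) + hh j' k) / card (V k)))
     = - 2 * \<delta> * (\<Sum>j\<in>UNIV. e j * pF j) - 2 * \<delta> * (\<Sum>j\<in>UNIV. card (V j) * e j * \<epsilon> j j)
       - (\<Sum>k\<in>UNIV. \<Sum>j\<in>V k. \<Sum>l\<in>V k. a j l * (\<epsilon> j k - \<epsilon> l k)\<^sup>2) + (\<Sum>k\<in>UNIV. 2 * (\<Sum>j\<in>V k. \<epsilon> j k * hh j k))"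
  proof -
    have "(\<Sum>k\<in>UNIV. \<Sum>j\<in>V k. 2 * (gg j k - (\<Sum>l\<in>V k. gg l k) / card (V k)) *
            ((- (\<Sum>l\<in>V k. a j l * (gg j k - gg l k)) + hh j k)
             - (\<Sum>j'\<in>V k. - (\<Sum>l\<in>V k. a j' l * (gg j' k - gg l k)) + hh j' k) / card (V k)))
        = (\<Sum>k\<in>UNIV. \<Sum>j\<in>V k. 2 * \<epsilon> j k * (gd j k - (\<Sum>j'\<in>V k. gd j' k) / card (V k)))"
      unfolding \<epsilon>_def gd_def av_def ..
    also have "\<dots> = (\<Sum>k\<in>UNIV. - (\<Sum>j\<in>V k. \<Sum>l\<in>V k. a j l * (\<epsilon> j k - \<epsilon> l k)\<^sup>2) + 2 * (\<Sum>j\<in>V k. \<epsilon> j k * hh j k))"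
      using part2 by simp
    also have "\<dots> = - (\<Sum>k\<in>UNIV. \<Sum>j\<in>V k. \<Sum>l\<in>V k. a j l * (\<epsilon> j k - \<epsilon> l k)\<^sup>2) + (\<Sum>k\<in>UNIV. 2 * (\<Sum>j\<in>V k. \<epsilon> j k * hh j k))"
      by (simp add: sum.distrib sum_negf sum_subtractf)
    finally show ?thesis using xpart by simp
  qed
  have K1': "K1 = 2 * n\<^sup>2 * \<rho> + 2 * n^3 * Dm * H * (G + \<rho>)" using K1 by (simp add: n_def)
  have lin: "\<delta> * (n * (2 * n * \<rho> * sE)) + n * (n * (2 * sE * M)) = \<delta> * K1 * sE"
    unfolding K1' M_def by (simp add: power2_eq_square power3_eq_cube algebra_simps)
  have quad: "- lm * E + \<delta> * K1 * sE \<le> - lm / 2 * E + \<delta>\<^sup>2 * (K1\<^sup>2 / (2 * lm))"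
  proof -
    have "0 \<le> lm / 2 * (sE - \<delta> * K1 / lm)\<^sup>2" using lm by simp
    also have "lm / 2 * (sE - \<delta> * K1 / lm)\<^sup>2 = lm / 2 * sE\<^sup>2 - \<delta> * K1 * sE + \<delta>\<^sup>2 * (K1\<^sup>2 / (2 * lm))"
      using lm by (simp add: power2_eq_square field_simps)
    finally show ?thesis using sE(2) by (simp add: algebra_simps)
  qed
  have fin: "- 2 * \<delta> * (\<Sum>j\<in>UNIV. e j * pF j) - lm / 2 * E \<le> - \<delta> * (2 * (\<Sum>j\<in>UNIV. e j * pF j) + lm / 2 * E)"
  proof -
    have "\<delta> * (lm / 2 * E) \<le> 1 * (lm / 2 * E)" using dl lm Enn by (intro mult_right_mono) auto
    then show ?thesis by (simp add: algebra_simps)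
  qed
  show ?thesis unfolding LHS using xcross hpart lapb lin quad fin by linarith
qed

lemma VC_sym: "j \<in> VC f k \<longleftrightarrow> k \<in> VC f j"
  unfolding VC_def NI_def by auto

lemma VC_self: "k \<in> VC f k" unfolding VC_def by auto

lemma C2_diff: "C2_fun h \<Longrightarrow> h differentiable (at y)"
  unfolding C2_fun_def by auto

lemma C2_pdiff: "C2_fun h \<Longrightarrow> pderiv_k h k differentiable (at y)"
  unfolding C2_fun_def C1_fun_def by auto

lemma C2_pcont: "C2_fun h \<Longrightarrow> continuous_on UNIV (pderiv_k h k)"
  using C2_pdiff by (meson differentiable_at_imp_differentiable_on differentiable_imp_continuous_on)

lemma C2_ppcont: "C2_fun h \<Longrightarrow> continuous_on UNIV (pderiv_k (pderiv_k h k) i)"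
  unfolding C2_fun_def C1_fun_def by auto

lemma sq_deriv:
  assumes "(u has_real_derivative u') (at t within S)"
  shows "((\<lambda>t. (u t - c)\<^sup>2) has_real_derivative 2 * (u t - c) * u') (at t within S)"
  using assms by (auto intro!: derivative_eq_intros simp: algebra_simps)

lemma const_from_zero_deriv:
  fixes S :: "real \<Rightarrow> real"
  assumes "\<forall>t\<ge>0. (S has_real_derivative 0) (at t within {0..})" "t \<ge> 0"
  shows "S t = S 0"
proof -
  have "S t \<le> S 0 - 0 * (t - 0)" by (rule decay_lemma[OF assms(1)]) (use assms in auto)
  moreover have "(\<lambda>t. - S t) t \<le> (\<lambda>t. - S t) 0 - 0 * (t - 0)"
    by (rule decay_lemma[where W'="\<lambda>t. 0"]) (use assms in \<open>auto intro!: derivative_eq_intros\<close>)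
  ultimately show ?thesis by simp
qed


lemma double_sum_zero:
  fixes a :: "'n \<Rightarrow> 'n \<Rightarrow> real"
  assumes a_sym: "\<forall>j l. a j l = a l j"
  shows "(\<Sum>j\<in>A. \<Sum>l\<in>A. a j l * (z j - z l)) = 0"
proof -
  have "(\<Sum>j\<in>A. \<Sum>l\<in>A. a j l * (z j - z l)) = (\<Sum>j\<in>A. \<Sum>l\<in>A. a j l * z j) - (\<Sum>j\<in>A. \<Sum>l\<in>A. a j l * z l)"
    by (simp add: right_diff_distrib sum_subtractf)
  also have "(\<Sum>j\<in>A. \<Sum>l\<in>A. a j l * z l) = (\<Sum>j\<in>A. \<Sum>l\<in>A. a j l * z j)"
    by (subst sum.swap) (simp add: a_sym)
  finally show ?thesis by simp
qed

locale dyn =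
  fixes f :: "'n::finite \<Rightarrow> real^'n \<Rightarrow> real" and a :: "'n \<Rightarrow> 'n \<Rightarrow> real" and dbar :: "'n \<Rightarrow> real"
    and \<delta> :: real and x :: "real \<Rightarrow> real^'n" and w :: "'n \<Rightarrow> 'n \<Rightarrow> real \<Rightarrow> real"
  assumes C2: "\<forall>j. C2_fun (f j)" and a_sym: "\<forall>j l. a j l = a l j"
  and xder: "\<forall>t\<ge>0. (x has_vector_derivative (\<chi> j. - (\<delta> * dbar j) * (w j j t + pderiv_k (f j) j (x t)))) (at t within {0..})"
  and wder: "\<forall>j. \<forall>k\<in>VC f j. \<forall>t\<ge>0. (w j k has_vector_derivative
                    (- (\<Sum>l\<in>VC f k. a j l * ((w j k t + pderiv_k (f j) k (x t)) - (w l k t + pderiv_k (f l) k (x t)))))) (at t within {0..})"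
  and w0: "\<forall>j. \<forall>k\<in>VC f j. w j k 0 = 0"
begin

definition gg where "gg j k t = w j k t + pderiv_k (f j) k (x t)"
definition pF where "pF k y = pderiv_k (\<lambda>z. \<Sum>j\<in>UNIV. f j z) k y"
definition H2 where "H2 j k i y = pderiv_k (pderiv_k (f j) k) i y"
definition hh where "hh j k t = (\<Sum>i\<in>UNIV. (- (\<delta> * dbar i) * gg i i t) * H2 j k i (x t))"
definition gd where "gd j k t = - (\<Sum>l\<in>VC f k. a j l * (gg j k t - gg l k t)) + hh j k t"
definition Ef where "Ef t = (\<Sum>k\<in>UNIV. \<Sum>j\<in>VC f k. (gg j k t - (\<Sum>l\<in>VC f k. gg l k t) / card (VC f k))\<^sup>2)"
definition Wf where "Wf xs t = (\<Sum>j\<in>UNIV. (card (VC f j) / dbar j) * (x t $ j - xs $ j)\<^sup>2) + Ef t"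
definition Wd where "Wd xs t = (\<Sum>j\<in>UNIV. (card (VC f j) / dbar j) * (2 * (x t $ j - xs $ j) * (- (\<delta> * dbar j) * gg j j t)))
   + (\<Sum>k\<in>UNIV. \<Sum>j\<in>VC f k. 2 * (gg j k t - (\<Sum>l\<in>VC f k. gg l k t) / card (VC f k)) *
        (gd j k t - (\<Sum>j'\<in>VC f k. gd j' k t) / card (VC f k)))"

lemma pF_sum: "pF k y = (\<Sum>j\<in>VC f k. pderiv_k (f j) k y)"
proof -
  have "pF k y = (\<Sum>j\<in>UNIV. pderiv_k (f j) k y)" unfolding pF_def
    using C2 C2_diff by (intro pderiv_sum) auto
  also have "\<dots> = (\<Sum>j\<in>VC f k. pderiv_k (f j) k y) + (\<Sum>j\<in>UNIV - VC f k. pderiv_k (f j) k y)"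
    by (metis add.commute finite sum.subset_diff subset_UNIV)
  also have "(\<Sum>j\<in>UNIV - VC f k. pderiv_k (f j) k y) = 0"
  proof (rule sum.neutral, rule ballI)
    fix j assume "j \<in> UNIV - VC f k"
    then have "\<not> depends_on (f j) k" unfolding VC_def NI_def by auto
    then show "pderiv_k (f j) k y = 0" using C2 C2_diff pderiv_nodep by blast
  qed
  finally show ?thesis by simp
qed

lemma x_comp: "t \<ge> 0 \<Longrightarrow> ((\<lambda>t. x t $ j) has_real_derivative (- (\<delta> * dbar j) * gg j j t)) (at t within {0..})"
proof -
  assume t: "t \<ge> 0"
  show ?thesis using comp_deriv[OF xder[rule_format, OF t], of j] by (simp add: gg_def)
qed

lemma gg_der:
  assumes jk: "j \<in> VC f k" and t: "t \<ge> 0"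
  shows "(gg j k has_real_derivative gd j k t) (at t within {0..})"
proof -
  have kj: "k \<in> VC f j" using jk VC_sym by metis
  have wd: "(w j k has_real_derivative (- (\<Sum>l\<in>VC f k. a j l * (gg j k t - gg l k t)))) (at t within {0..})"
    using wder kj t by (simp add: has_real_derivative_iff_has_vector_derivative gg_def)
  have pd: "((\<lambda>t. pderiv_k (f j) k (x t)) has_real_derivative
      (\<Sum>i\<in>UNIV. (\<chi> j. - (\<delta> * dbar j) * (w j j t + pderiv_k (f j) j (x t))) $ i * pderiv_k (pderiv_k (f j) k) i (x t))) (at t within {0..})"
    by (rule chain_pd) (use C2 C2_pdiff xder t in auto)
  have "(\<Sum>i\<in>UNIV. (\<chi> j. - (\<delta> * dbar j) * (w j j t + pderiv_k (f j) j (x t))) $ i * pderiv_k (pderiv_k (f j) k) i (x t)) = hh j k t"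
    by (simp add: hh_def H2_def gg_def)
  then have pd': "((\<lambda>t. pderiv_k (f j) k (x t)) has_real_derivative hh j k t) (at t within {0..})" using pd by simp
  have "((\<lambda>t. w j k t + pderiv_k (f j) k (x t)) has_real_derivative (- (\<Sum>l\<in>VC f k. a j l * (gg j k t - gg l k t))) + hh j k t) (at t within {0..})"
    by (rule DERIV_add[OF wd pd'])
  then show ?thesis by (simp add: gg_def[abs_def] gd_def)
qed

lemma cons_w: "t \<ge> 0 \<Longrightarrow> (\<Sum>j\<in>VC f k. w j k t) = 0"
proof -
  assume t: "t \<ge> 0"
  have D0: "\<forall>t\<ge>0. ((\<lambda>t. \<Sum>j\<in>VC f k. w j k t) has_real_derivative 0) (at t within {0..})"
  proof (intro allI impI)
    fix t :: real assume t: "t \<ge> 0"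
    have "((\<lambda>t. \<Sum>j\<in>VC f k. w j k t) has_real_derivative (\<Sum>j\<in>VC f k. - (\<Sum>l\<in>VC f k. a j l * (gg j k t - gg l k t)))) (at t within {0..})"
    proof (rule DERIV_sum)
      fix j assume j: "j \<in> VC f k"
      then have kj: "k \<in> VC f j" using VC_sym by metis
      show "((\<lambda>t. w j k t) has_real_derivative (- (\<Sum>l\<in>VC f k. a j l * (gg j k t - gg l k t)))) (at t within {0..})"
        using wder kj t by (simp add: has_real_derivative_iff_has_vector_derivative gg_def)
    qed
    moreover have "(\<Sum>j\<in>VC f k. - (\<Sum>l\<in>VC f k. a j l * (gg j k t - gg l k t))) = 0"
      using double_sum_zero[OF a_sym, where A="VC f k" and z="\<lambda>j. gg j k t"] by (simp add: sum_negf)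
    ultimately show "((\<lambda>t. \<Sum>j\<in>VC f k. w j k t) has_real_derivative 0) (at t within {0..})" by simp
  qed
  have "(\<Sum>j\<in>VC f k. w j k 0) = 0"
  proof (rule sum.neutral, rule ballI)
    fix j assume "j \<in> VC f k"
    then have "k \<in> VC f j" using VC_sym by metis
    then show "w j k 0 = 0" using w0 by blast
  qed
  with const_from_zero_deriv[OF D0 t] show ?thesis by simp
qed

lemma cons: "t \<ge> 0 \<Longrightarrow> (\<Sum>j\<in>VC f k. gg j k t) = pF k (x t)"
  using cons_w[of t k] by (simp add: gg_def sum.distrib pF_sum)

lemma W_der:
  assumes t: "t \<ge> 0"
  shows "(Wf xs has_real_derivative Wd xs t) (at t within {0..})"
proof -
  have A: "((\<lambda>t. \<Sum>j\<in>UNIV. (card (VC f j) / dbar j) * (x t $ j - xs $ j)\<^sup>2) has_real_derivative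
      (\<Sum>j\<in>UNIV. (card (VC f j) / dbar j) * (2 * (x t $ j - xs $ j) * (- (\<delta> * dbar j) * gg j j t)))) (at t within {0..})"
    by (intro DERIV_sum DERIV_cmult sq_deriv x_comp t)
  have B: "(Ef has_real_derivative (\<Sum>k\<in>UNIV. \<Sum>j\<in>VC f k. 2 * (gg j k t - (\<Sum>l\<in>VC f k. gg l k t) / card (VC f k)) *
        (gd j k t - (\<Sum>j'\<in>VC f k. gd j' k t) / card (VC f k)))) (at t within {0..})"
    unfolding Ef_def[abs_def]
  proof (intro DERIV_sum)
    fix k j assume j: "j \<in> VC f k"
    have "((\<lambda>t. gg j k t - (\<Sum>l\<in>VC f k. gg l k t) / card (VC f k)) has_real_derivative
        gd j k t - (\<Sum>j'\<in>VC f k. gd j' k t) / card (VC f k)) (at t within {0..})"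
      by (intro DERIV_diff DERIV_cdivide DERIV_sum gg_der t j) auto
    from sq_deriv[OF this, of 0]
    show "((\<lambda>t. (gg j k t - (\<Sum>l\<in>VC f k. gg l k t) / card (VC f k))\<^sup>2) has_real_derivative
        2 * (gg j k t - (\<Sum>l\<in>VC f k. gg l k t) / card (VC f k)) * (gd j k t - (\<Sum>j'\<in>VC f k. gd j' k t) / card (VC f k))) (at t within {0..})"
      by simp
  qed
  show ?thesis unfolding Wf_def[abs_def] Wd_def using DERIV_add[OF A B] by simp
qed

lemma eps_bd:
  assumes "j \<in> VC f k"
  shows "\<bar>gg j k t - (\<Sum>l\<in>VC f k. gg l k t) / card (VC f k)\<bar> \<le> sqrt (Ef t)"
proof -
  have "(gg j k t - (\<Sum>l\<in>VC f k. gg l k t) / card (VC f k))\<^sup>2 \<le> (\<Sum>j\<in>VC f k. (gg j k t - (\<Sum>l\<in>VC f k. gg l k t) / card (VC f k))\<^sup>2)"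
    using assms by (intro member_le_sum) auto
  also have "\<dots> \<le> Ef t" unfolding Ef_def by (intro member_le_sum) (auto intro: sum_nonneg)
  finally show ?thesis by (simp add: real_le_rsqrt)
qed

lemma gg_bd:
  assumes t: "t \<ge> 0" and G: "\<bar>pF i (x t)\<bar> \<le> G"
  shows "\<bar>gg i i t\<bar> \<le> G + sqrt (Ef t)"
proof -
  have c: "card (VC f i) \<ge> 1" using VC_self by (metis One_nat_def Suc_leI card_gt_0_iff empty_iff finite)
  have av: "(\<Sum>l\<in>VC f i. gg l i t) / card (VC f i) = pF i (x t) / card (VC f i)" using cons[OF t] by simp
  have "\<bar>pF i (x t) / card (VC f i)\<bar> \<le> \<bar>pF i (x t)\<bar>"
  proof -
    have "1 * \<bar>pF i (x t)\<bar> \<le> real (card (VC f i)) * \<bar>pF i (x t)\<bar>" using c by (intro mult_right_mono) auto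
    then show ?thesis using c by (simp add: abs_divide divide_le_eq mult.commute)
  qed
  then have "\<bar>(\<Sum>l\<in>VC f i. gg l i t) / card (VC f i)\<bar> \<le> G" unfolding av using G by linarith
  moreover have "\<bar>gg i i t - (\<Sum>l\<in>VC f i. gg l i t) / card (VC f i)\<bar> \<le> sqrt (Ef t)" by (rule eps_bd[OF VC_self])
  ultimately show ?thesis by linarith
qed

lemma Wd_bound:
  assumes lap: "\<forall>\<epsilon> :: 'n \<Rightarrow> 'n \<Rightarrow> real. (\<forall>k. (\<Sum>j\<in>VC f k. \<epsilon> j k) = 0) \<longrightarrow>
     lm * (\<Sum>k\<in>UNIV. \<Sum>j\<in>VC f k. (\<epsilon> j k)\<^sup>2) \<le> (\<Sum>k\<in>UNIV. \<Sum>j\<in>VC f k. \<Sum>l\<in>VC f k. a j l * (\<epsilon> j k - \<epsilon> l k)\<^sup>2)"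
  and lm: "lm > 0" and dl: "0 < \<delta>" "\<delta> \<le> 1"
  and d: "\<forall>j. dbar j > 0" "\<forall>j. dbar j \<le> Dm"
  and t: "t \<ge> 0"
  and G: "\<forall>j. \<bar>pF j (x t)\<bar> \<le> G" and H: "\<forall>j k i. \<bar>H2 j k i (x t)\<bar> \<le> H"
  and e: "\<forall>j. \<bar>x t $ j - xs $ j\<bar> \<le> \<rho>" and Ebd: "Ef t \<le> \<rho>\<^sup>2"
  and nn: "G \<ge> 0" "H \<ge> 0" "\<rho> \<ge> 0"
  and K1: "K1 = 2 * (real CARD('n))\<^sup>2 * \<rho> + 2 * (real CARD('n))^3 * Dm * H * (G + \<rho>)"
  shows "Wd xs t \<le> - \<delta> * (2 * (\<Sum>j\<in>UNIV. (x t $ j - xs $ j) * pF j (x t)) + lm / 2 * Ef t) + \<delta>\<^sup>2 * (K1\<^sup>2 / (2 * lm))"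
proof -
  have hb: "\<forall>j k. \<bar>hh j k t\<bar> \<le> real CARD('n) * \<delta> * Dm * H * (G + sqrt (Ef t))"
  proof (intro allI)
    fix j k
    have "\<bar>hh j k t\<bar> \<le> (\<Sum>i\<in>UNIV. \<bar>(- (\<delta> * dbar i) * gg i i t) * H2 j k i (x t)\<bar>)"
      unfolding hh_def by (rule sum_abs)
    also have "\<dots> \<le> real CARD('n) * (\<delta> * Dm * H * (G + sqrt (Ef t)))"
    proof (rule sum_le_card_mult)
      show "\<forall>i\<in>UNIV. \<bar>(- (\<delta> * dbar i) * gg i i t) * H2 j k i (x t)\<bar> \<le> \<delta> * Dm * H * (G + sqrt (Ef t))"
      proof
        fix i :: 'n
        have "0 < dbar i" using d by blast
        then have "\<bar>- (\<delta> * dbar i)\<bar> = \<delta> * dbar i" using dl by (simp add: abs_mult)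
        also have "\<dots> \<le> \<delta> * Dm" using dl d by (intro mult_left_mono) auto
        finally have "\<bar>- (\<delta> * dbar i)\<bar> \<le> \<delta> * Dm" .
        moreover have "\<bar>gg i i t\<bar> \<le> G + sqrt (Ef t)" using gg_bd[OF t] G by blast
        moreover have "\<bar>H2 j k i (x t)\<bar> \<le> H" using H by blast
        ultimately have "\<bar>- (\<delta> * dbar i)\<bar> * \<bar>gg i i t\<bar> * \<bar>H2 j k i (x t)\<bar> \<le> (\<delta> * Dm) * (G + sqrt (Ef t)) * H"
          by (intro mult_mono) auto
        then show "\<bar>(- (\<delta> * dbar i) * gg i i t) * H2 j k i (x t)\<bar> \<le> \<delta> * Dm * H * (G + sqrt (Ef t))"
          by (simp add: abs_mult mult_ac)
      qed
      have "0 < dbar undefined" "dbar undefined \<le> Dm" using d by auto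
      then have "0 \<le> Dm" by linarith
      moreover have "0 \<le> sqrt (Ef t)" unfolding Ef_def by (auto intro!: sum_nonneg)
      ultimately show "0 \<le> \<delta> * Dm * H * (G + sqrt (Ef t))" using dl nn
        by (intro mult_nonneg_nonneg) auto
    qed
    finally show "\<bar>hh j k t\<bar> \<le> real CARD('n) * \<delta> * Dm * H * (G + sqrt (Ef t))" by (simp add: mult_ac)
  qed
  have "Wd xs t = (\<Sum>j\<in>UNIV. (card (VC f j) / dbar j) * (2 * (x t $ j - xs $ j) * (- (\<delta> * dbar j) * gg j j t)))
       + (\<Sum>k\<in>UNIV. \<Sum>j\<in>VC f k. 2 * (gg j k t - (\<Sum>l\<in>VC f k. gg l k t) / card (VC f k)) *
            ((- (\<Sum>l\<in>VC f k. a j l * (gg j k t - gg l k t)) + hh j k t)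
             - (\<Sum>j'\<in>VC f k. - (\<Sum>l\<in>VC f k. a j' l * (gg j' k t - gg l k t)) + hh j' k t) / card (VC f k)))"
    unfolding Wd_def gd_def ..
  also have "\<dots> \<le> - \<delta> * (2 * (\<Sum>j\<in>UNIV. (x t $ j - xs $ j) * pF j (x t)) + lm / 2 * Ef t) + \<delta>\<^sup>2 * (K1\<^sup>2 / (2 * lm))"
  proof -
    have Vk: "\<forall>k. k \<in> VC f k" using VC_self by blast
    have pF1: "\<forall>j. (\<Sum>l\<in>VC f j. gg l j t) = pF j (x t)" using cons[OF t] by blast
    have Edef: "Ef t = (\<Sum>k\<in>UNIV. \<Sum>j\<in>VC f k. (gg j k t - (\<Sum>l\<in>VC f k. gg l k t) / card (VC f k))\<^sup>2)"
      by (rule Ef_def)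
    show ?thesis
      by (rule alg_bound[where V="VC f" and gg="\<lambda>j k. gg j k t" and hh="\<lambda>j k. hh j k t" and e="\<lambda>j. x t $ j - xs $ j"
          and pF="\<lambda>j. pF j (x t)" and d=dbar and a=a and E="Ef t", OF a_sym Vk lap lm dl d pF1 G e Edef Ebd hb nn K1])
  qed
  finally show ?thesis .
qed

end

lemma bounds_on_compact:
  fixes h :: "'i::finite \<Rightarrow> 'a::metric_space \<Rightarrow> real"
  assumes S: "compact S" and c: "\<forall>i. continuous_on S (h i)"
  shows "\<exists>G\<ge>0. \<forall>i. \<forall>y\<in>S. \<bar>h i y\<bar> \<le> G"
proof -
  have "\<forall>i. \<exists>B. \<forall>y\<in>S. \<bar>h i y\<bar> \<le> B"
  proof
    fix i
    have "compact (h i ` S)" using compact_continuous_image c S by blast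
    then have "bounded (h i ` S)" by (rule compact_imp_bounded)
    then obtain B where "\<forall>z\<in>h i ` S. norm z \<le> B" by (auto simp: bounded_iff)
    then show "\<exists>B. \<forall>y\<in>S. \<bar>h i y\<bar> \<le> B" by auto
  qed
  then obtain B where B: "\<forall>i. \<forall>y\<in>S. \<bar>h i y\<bar> \<le> B i" by metis
  define G where "G = (\<Sum>i\<in>UNIV. \<bar>B i\<bar>)"
  have "\<forall>i. \<forall>y\<in>S. \<bar>h i y\<bar> \<le> G"
  proof (intro allI ballI)
    fix i y assume y: "y \<in> S"
    have "\<bar>B i\<bar> \<le> G" unfolding G_def by (rule member_le_sum) auto
    moreover have "\<bar>h i y\<bar> \<le> B i" using B y by blast
    ultimately show "\<bar>h i y\<bar> \<le> G" by linarith
  qed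
  moreover have "G \<ge> 0" unfolding G_def by (intro sum_nonneg) auto
  ultimately show ?thesis by blast
qed

lemma dev_identity:
  fixes y :: "'n \<Rightarrow> real"
  assumes "finite A" "card A \<ge> 1"
  shows "(\<Sum>j\<in>A. (y j - (\<Sum>l\<in>A. y l) / card A)\<^sup>2) = (\<Sum>j\<in>A. (y j)\<^sup>2) - (\<Sum>l\<in>A. y l)\<^sup>2 / card A"
proof -
  define S where "S = (\<Sum>l\<in>A. y l)"
  define N where "N = real (card A)"
  have N: "N > 0" using assms by (simp add: N_def)
  have 1: "(\<Sum>j\<in>A. (y j - S / N)\<^sup>2) = (\<Sum>j\<in>A. (y j)\<^sup>2 - 2 * (S / N) * y j + (S/N)\<^sup>2)"
    by (intro sum.cong) (auto simp: power2_eq_square algebra_simps)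
  have 2: "\<dots> = (\<Sum>j\<in>A. (y j)\<^sup>2) - (\<Sum>j\<in>A. 2 * (S / N) * y j) + (\<Sum>j\<in>A. (S/N)\<^sup>2)"
    by (simp add: sum.distrib sum_subtractf)
  have 3: "(\<Sum>j\<in>A. 2 * (S / N) * y j) = 2 * (S / N) * S"
    by (simp only: S_def sum_distrib_left)
  have 4: "(\<Sum>j\<in>A. (S/N)\<^sup>2) = N * (S/N)\<^sup>2" by (simp add: N_def)
  have 5: "2 * (S / N) * S - N * (S/N)\<^sup>2 = S\<^sup>2 / N" using N by (simp add: power2_eq_square field_simps)
  have "(\<Sum>j\<in>A. (y j - S / N)\<^sup>2) = (\<Sum>j\<in>A. (y j)\<^sup>2) - S\<^sup>2 / N"
    using 1 2 3 4 5 by linarith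
  then show ?thesis by (simp add: S_def N_def)
qed

lemma norm_sq_vec: "(norm (e :: real^'n::finite))\<^sup>2 = (\<Sum>j\<in>UNIV. (e $ j)\<^sup>2)"
  by (simp only: power2_norm_eq_inner inner_vec_def) (simp add: power2_eq_square)

lemma chi_norm_sq:
  assumes R: "admissible_R f R"
  shows "(chi_norm f R g x xs)\<^sup>2 = (\<Sum>k\<in>UNIV. \<Sum>j\<in>VC f k. (g j k - (\<Sum>l\<in>VC f k. g l k) / card (VC f k))\<^sup>2) + (norm (x - xs))\<^sup>2"
proof -
  have c: "\<And>k. card (VC f k) \<ge> 1" using VC_self by (metis One_nat_def Suc_leI card_gt_0_iff empty_iff finite)
  have k: "\<And>k. (\<Sum>i<card (VC f k) - 1. (\<Sum>j\<in>VC f k. R k i j * g j k)\<^sup>2) = (\<Sum>j\<in>VC f k. (g j k - (\<Sum>l\<in>VC f k. g l k) / card (VC f k))\<^sup>2)"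
  proof -
    fix k
    have "(\<Sum>i<card (VC f k) - 1. (\<Sum>j\<in>VC f k. R k i j * g j k)\<^sup>2) + (\<Sum>j\<in>VC f k. g j k)\<^sup>2 / card (VC f k) = (\<Sum>j\<in>VC f k. (g j k)\<^sup>2)"
      by (rule parseval_aux[OF c]) (use R in \<open>auto simp: admissible_R_def\<close>)
    then show "?thesis k" using dev_identity[of "VC f k" "\<lambda>j. g j k"] c by simp
  qed
  have nn: "0 \<le> (\<Sum>k\<in>UNIV. \<Sum>i<card (VC f k) - 1. (\<Sum>j\<in>VC f k. R k i j * g j k)\<^sup>2) + (norm (x - xs))\<^sup>2"
    by (intro add_nonneg_nonneg sum_nonneg) auto
  show ?thesis unfolding chi_norm_def using nn k by simp
qed

definition Pq :: "('n::finite \<Rightarrow> real^'n \<Rightarrow> real) \<Rightarrow> ('n \<Rightarrow> real) \<Rightarrow> real^'n \<Rightarrow> real" where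
  "Pq f dbar e = (\<Sum>j\<in>UNIV. (card (VC f j) / dbar j) * (e $ j)\<^sup>2)"

definition Phi :: "('n::finite \<Rightarrow> real^'n \<Rightarrow> real) \<Rightarrow> real \<Rightarrow> real^'n \<Rightarrow> (real^'n) \<times> real \<Rightarrow> real" where
  "Phi f lm xs p = 2 * (\<Sum>j\<in>UNIV. fst p $ j * pderiv_k (\<lambda>z. \<Sum>i\<in>UNIV. f i z) j (xs + fst p)) + lm / 2 * snd p"

definition Ks :: "('n::finite \<Rightarrow> real^'n \<Rightarrow> real) \<Rightarrow> ('n \<Rightarrow> real) \<Rightarrow> real \<Rightarrow> real \<Rightarrow> ((real^'n) \<times> real) set" where
  "Ks f dbar \<rho> \<mu> = {p. norm (fst p) \<le> \<rho> \<and> 0 \<le> snd p \<and> snd p \<le> \<rho>\<^sup>2 \<and> \<mu> \<le> Pq f dbar (fst p) + snd p}"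

lemma Ks_mono: "\<rho> \<le> \<rho>' \<Longrightarrow> 0 \<le> \<rho> \<Longrightarrow> \<mu>' \<le> \<mu> \<Longrightarrow> Ks f dbar \<rho> \<mu> \<subseteq> Ks f dbar \<rho>' \<mu>'"
  unfolding Ks_def by (auto intro: order_trans power_mono)

lemma Ks_compact:
  fixes f :: "'n::finite \<Rightarrow> real^'n \<Rightarrow> real"
  shows "compact (Ks f dbar \<rho> \<mu>)"
proof -
  have sub: "Ks f dbar \<rho> \<mu> = (cball 0 \<rho> \<times> cbox 0 (\<rho>\<^sup>2)) \<inter> {p. \<mu> \<le> Pq f dbar (fst p) + snd p}"
    unfolding Ks_def by (auto simp: dist_norm)
  have "closed {p :: (real^'n) \<times> real. \<mu> \<le> Pq f dbar (fst p) + snd p}"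
    unfolding Pq_def by (intro closed_Collect_le continuous_intros) 
  then show ?thesis unfolding sub by (intro compact_Int_closed compact_Times) auto
qed

lemma pF_cont:
  fixes f :: "'n::finite \<Rightarrow> real^'n \<Rightarrow> real"
  assumes C2: "\<forall>j. C2_fun (f j)"
  shows "continuous_on UNIV (pderiv_k (\<lambda>z. \<Sum>i\<in>UNIV. f i z) k)"
proof -
  have "pderiv_k (\<lambda>z. \<Sum>i\<in>UNIV. f i z) k = (\<lambda>y. \<Sum>i\<in>UNIV. pderiv_k (f i) k y)"
    using C2 C2_diff by (intro ext pderiv_sum) auto
  moreover have "continuous_on UNIV (\<lambda>y. \<Sum>i\<in>UNIV. pderiv_k (f i) k y)"
    using C2 C2_pcont by (intro continuous_intros) auto
  ultimately show ?thesis by simp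
qed

lemma Phi_cont:
  fixes f :: "'n::finite \<Rightarrow> real^'n \<Rightarrow> real"
  assumes C2: "\<forall>j. C2_fun (f j)"
  shows "continuous_on S (Phi f lm xs)"
proof -
  have "\<And>j. continuous_on S (\<lambda>p :: (real^'n) \<times> real. pderiv_k (\<lambda>z. \<Sum>i\<in>UNIV. f i z) j (xs + fst p))"
    by (rule continuous_on_compose2[OF pF_cont[OF C2]]) (auto intro!: continuous_intros)
  then show ?thesis unfolding Phi_def[abs_def] by (intro continuous_intros) auto
qed

lemma Phi_pos:
  fixes f :: "'n::finite \<Rightarrow> real^'n \<Rightarrow> real"
  assumes C2: "\<forall>j. C2_fun (f j)"
    and minimizer: "\<forall>y. (\<Sum>j\<in>UNIV. f j xs) \<le> (\<Sum>j\<in>UNIV. f j y)"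
    and smg: "\<forall>x y. x \<noteq> y \<longrightarrow>
          (\<Sum>k\<in>UNIV. (x $ k - y $ k) *
             (pderiv_k (\<lambda>z. \<Sum>j\<in>UNIV. f j z) k x - pderiv_k (\<lambda>z. \<Sum>j\<in>UNIV. f j z) k y)) > 0"
    and lm: "lm > 0" and mu: "\<mu> > 0"
    and p: "p \<in> Ks f dbar \<rho> \<mu>"
  shows "Phi f lm xs p > 0"
proof -
  obtain e E where pe: "p = (e, E)" by (cases p) auto
  have E0: "E \<ge> 0" using p pe by (auto simp: Ks_def)
  have g0: "\<And>k. pderiv_k (\<lambda>z. \<Sum>j\<in>UNIV. f j z) k xs = 0"
  proof (rule pderiv_min)
    show "(\<lambda>z. \<Sum>j\<in>UNIV. f j z) differentiable (at xs)"
      by (intro differentiable_sum) (use C2 C2_diff in auto)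
  qed (use minimizer in auto)
  show ?thesis
  proof (cases "e = 0")
    case True
    then have "Pq f dbar e = 0" by (simp add: Pq_def)
    then have "E \<ge> \<mu>" using p pe by (auto simp: Ks_def)
    then show ?thesis using True pe lm mu by (simp add: Phi_def)
  next
    case False
    then have "xs + e \<noteq> xs" by simp
    then have "(\<Sum>k\<in>UNIV. ((xs + e) $ k - xs $ k) *
             (pderiv_k (\<lambda>z. \<Sum>j\<in>UNIV. f j z) k (xs + e) - pderiv_k (\<lambda>z. \<Sum>j\<in>UNIV. f j z) k xs)) > 0"
      using smg by blast
    then have "(\<Sum>k\<in>UNIV. e $ k * pderiv_k (\<lambda>z. \<Sum>j\<in>UNIV. f j z) k (xs + e)) > 0" by (simp add: g0)
    moreover have "0 \<le> lm * E" using lm E0 by simp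
    ultimately show ?thesis using pe by (simp add: Phi_def)
  qed
qed

lemma Inf_Phi:
  fixes f :: "'n::finite \<Rightarrow> real^'n \<Rightarrow> real"
  assumes C2: "\<forall>j. C2_fun (f j)"
    and minimizer: "\<forall>y. (\<Sum>j\<in>UNIV. f j xs) \<le> (\<Sum>j\<in>UNIV. f j y)"
    and smg: "\<forall>x y. x \<noteq> y \<longrightarrow>
          (\<Sum>k\<in>UNIV. (x $ k - y $ k) *
             (pderiv_k (\<lambda>z. \<Sum>j\<in>UNIV. f j z) k x - pderiv_k (\<lambda>z. \<Sum>j\<in>UNIV. f j z) k y)) > 0"
    and lm: "lm > 0" and mu: "\<mu> > 0"
    and ne: "Ks f dbar \<rho> \<mu> \<noteq> {}"
  shows "Inf (Phi f lm xs ` Ks f dbar \<rho> \<mu>) > 0" "\<forall>p\<in>Ks f dbar \<rho> \<mu>. Inf (Phi f lm xs ` Ks f dbar \<rho> \<mu>) \<le> Phi f lm xs p"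
    "bdd_below (Phi f lm xs ` Ks f dbar \<rho> \<mu>)"
proof -
  obtain p0 where p0: "p0 \<in> Ks f dbar \<rho> \<mu>" "\<forall>p\<in>Ks f dbar \<rho> \<mu>. Phi f lm xs p0 \<le> Phi f lm xs p"
    using continuous_attains_inf[OF Ks_compact ne Phi_cont[OF C2]] by blast
  have I: "Inf (Phi f lm xs ` Ks f dbar \<rho> \<mu>) = Phi f lm xs p0"
    using p0 by (intro cInf_eq_minimum) auto
  show "Inf (Phi f lm xs ` Ks f dbar \<rho> \<mu>) > 0" unfolding I by (rule Phi_pos[OF C2 minimizer smg lm mu p0(1)])
  show "\<forall>p\<in>Ks f dbar \<rho> \<mu>. Inf (Phi f lm xs ` Ks f dbar \<rho> \<mu>) \<le> Phi f lm xs p" unfolding I using p0 by auto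
  show "bdd_below (Phi f lm xs ` Ks f dbar \<rho> \<mu>)" using p0 by (auto simp: bdd_below_def)
qed

context dyn
begin

lemma Ef_nn: "0 \<le> Ef t" unfolding Ef_def by (intro sum_nonneg) auto

lemma region:
  assumes clo: "0 < clo" "\<forall>j. clo \<le> card (VC f j) / dbar j"
  and W: "Wf xs t \<le> M"
  shows "(norm (x t - xs))\<^sup>2 \<le> M / clo" "Ef t \<le> M"
proof -
  have "clo * (norm (x t - xs))\<^sup>2 = (\<Sum>j\<in>UNIV. clo * (x t $ j - xs $ j)\<^sup>2)"
    by (simp add: norm_sq_vec sum_distrib_left)
  also have "\<dots> \<le> (\<Sum>j\<in>UNIV. (card (VC f j) / dbar j) * (x t $ j - xs $ j)\<^sup>2)"
    using clo by (intro sum_mono mult_right_mono) auto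
  finally have 1: "clo * (norm (x t - xs))\<^sup>2 \<le> (\<Sum>j\<in>UNIV. (card (VC f j) / dbar j) * (x t $ j - xs $ j)\<^sup>2)" .
  have 2: "0 \<le> (\<Sum>j\<in>UNIV. (card (VC f j) / dbar j) * (x t $ j - xs $ j)\<^sup>2)"
    using 1 clo by (smt (verit) mult_nonneg_nonneg zero_le_power2)
  have "clo * (norm (x t - xs))\<^sup>2 \<le> M" using 1 W Ef_nn[of t] unfolding Wf_def by linarith
  then show "(norm (x t - xs))\<^sup>2 \<le> M / clo" using clo by (simp add: field_simps)
  show "Ef t \<le> M" using 2 W unfolding Wf_def by linarith
qed

lemma mem_Ks:
  assumes clo: "0 < clo" "clo \<le> 1" "\<forall>j. clo \<le> card (VC f j) / dbar j"
  and W: "Wf xs t \<le> M" "\<mu> \<le> Wf xs t" and M: "0 \<le> M" and rho: "M / clo \<le> \<rho>\<^sup>2" "0 \<le> \<rho>"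
  shows "(x t - xs, Ef t) \<in> Ks f dbar \<rho> \<mu>"
proof -
  have "(norm (x t - xs))\<^sup>2 \<le> \<rho>\<^sup>2" using region(1)[OF clo(1) clo(3) W(1)] rho by linarith
  then have n: "norm (x t - xs) \<le> \<rho>" using rho(2) by (meson norm_ge_zero power2_le_imp_le)
  have "M \<le> M / clo" using clo M by (simp add: le_divide_eq mult_left_le)
  then have e: "Ef t \<le> \<rho>\<^sup>2" using region(2)[OF clo(1) clo(3) W(1)] rho by linarith
  have "Pq f dbar (x t - xs) + Ef t = Wf xs t" by (simp add: Pq_def Wf_def)
  then show ?thesis using n e Ef_nn[of t] W(2) by (simp add: Ks_def)
qed

lemma Wd_Phi:
  assumes lap: "\<forall>\<epsilon> :: 'n \<Rightarrow> 'n \<Rightarrow> real. (\<forall>k. (\<Sum>j\<in>VC f k. \<epsilon> j k) = 0) \<longrightarrow>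
     lm * (\<Sum>k\<in>UNIV. \<Sum>j\<in>VC f k. (\<epsilon> j k)\<^sup>2) \<le> (\<Sum>k\<in>UNIV. \<Sum>j\<in>VC f k. \<Sum>l\<in>VC f k. a j l * (\<epsilon> j k - \<epsilon> l k)\<^sup>2)"
  and lm: "lm > 0" and dl: "0 < \<delta>" "\<delta> \<le> 1"
  and d: "\<forall>j. dbar j > 0" "\<forall>j. dbar j \<le> Dm"
  and clo: "0 < clo" "clo \<le> 1" "\<forall>j. clo \<le> card (VC f j) / dbar j"
  and Bd: "0 \<le> Bd"
  and Gb: "\<forall>j. \<forall>y\<in>cball xs (sqrt (Bd / clo)). \<bar>pF j y\<bar> \<le> G"
  and Hb: "\<forall>j k i. \<forall>y\<in>cball xs (sqrt (Bd / clo)). \<bar>H2 j k i y\<bar> \<le> H"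
  and nn: "G \<ge> 0" "H \<ge> 0"
  and K1: "K1 = 2 * (real CARD('n))\<^sup>2 * sqrt (Bd / clo) + 2 * (real CARD('n))^3 * Dm * H * (G + sqrt (Bd / clo))"
  and t: "t \<ge> 0" and W: "Wf xs t \<le> Bd"
  shows "Wd xs t \<le> - \<delta> * Phi f lm xs (x t - xs, Ef t) + \<delta>\<^sup>2 * (K1\<^sup>2 / (2 * lm))"
proof -
  define \<rho> where "\<rho> = sqrt (Bd / clo)"
  have r2: "\<rho>\<^sup>2 = Bd / clo" using Bd clo by (simp add: \<rho>_def)
  have r0: "\<rho> \<ge> 0" using Bd clo by (simp add: \<rho>_def)
  have "(norm (x t - xs))\<^sup>2 \<le> \<rho>\<^sup>2" using region(1)[OF clo(1) clo(3) W] r2 by simp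
  then have n: "norm (x t - xs) \<le> \<rho>" using r0 by (meson norm_ge_zero power2_le_imp_le)
  then have ball: "x t \<in> cball xs \<rho>" by (simp add: dist_norm norm_minus_commute)
  have e: "\<forall>j. \<bar>x t $ j - xs $ j\<bar> \<le> \<rho>"
    using n component_le_norm_cart[of "x t - xs"] by (metis order_trans vector_minus_component)
  have "Bd \<le> Bd / clo" using clo Bd by (simp add: le_divide_eq mult_left_le)
  then have E: "Ef t \<le> \<rho>\<^sup>2" using region(2)[OF clo(1) clo(3) W] r2 by linarith
  have "Wd xs t \<le> - \<delta> * (2 * (\<Sum>j\<in>UNIV. (x t $ j - xs $ j) * pF j (x t)) + lm / 2 * Ef t) + \<delta>\<^sup>2 * (K1\<^sup>2 / (2 * lm))"
    by (rule Wd_bound[OF lap lm dl d t _ _ e E nn r0]) (use Gb Hb ball K1 in \<open>auto simp: \<rho>_def\<close>)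
  also have "2 * (\<Sum>j\<in>UNIV. (x t $ j - xs $ j) * pF j (x t)) + lm / 2 * Ef t = Phi f lm xs (x t - xs, Ef t)"
    by (simp add: Phi_def pF_def)
  finally show ?thesis .
qed

lemma main_est:
  assumes lap: "\<forall>\<epsilon> :: 'n \<Rightarrow> 'n \<Rightarrow> real. (\<forall>k. (\<Sum>j\<in>VC f k. \<epsilon> j k) = 0) \<longrightarrow>
     lm * (\<Sum>k\<in>UNIV. \<Sum>j\<in>VC f k. (\<epsilon> j k)\<^sup>2) \<le> (\<Sum>k\<in>UNIV. \<Sum>j\<in>VC f k. \<Sum>l\<in>VC f k. a j l * (\<epsilon> j k - \<epsilon> l k)\<^sup>2)"
  and lm: "lm > 0" and dl: "0 < \<delta>" "\<delta> \<le> 1"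
  and d: "\<forall>j. dbar j > 0" "\<forall>j. dbar j \<le> Dm"
  and clo: "0 < clo" "clo \<le> 1" "\<forall>j. clo \<le> card (VC f j) / dbar j"
  and B0: "0 \<le> B0" "Wf xs 0 \<le> B0" and mu0: "0 < \<mu>0" "\<mu>0 \<le> 1" and Bd: "B0 + 2 \<le> Bd"
  and rr: "(B0 + 2) / clo \<le> \<rho>r\<^sup>2" "0 \<le> \<rho>r" "\<rho>r \<le> sqrt (Bd / clo)"
  and Gb: "\<forall>j. \<forall>y\<in>cball xs (sqrt (Bd / clo)). \<bar>pF j y\<bar> \<le> G"
  and Hb: "\<forall>j k i. \<forall>y\<in>cball xs (sqrt (Bd / clo)). \<bar>H2 j k i y\<bar> \<le> H"
  and nn: "G \<ge> 0" "H \<ge> 0"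
  and K1: "K1 = 2 * (real CARD('n))\<^sup>2 * sqrt (Bd / clo) + 2 * (real CARD('n))^3 * Dm * H * (G + sqrt (Bd / clo))"
  and ms: "0 < mstar" "\<forall>p\<in>Ks f dbar (sqrt (Bd / clo)) \<mu>0. mstar \<le> Phi f lm xs p"
  and small: "\<delta> * (K1\<^sup>2 / (2 * lm)) \<le> mstar / 2"
  and infp: "\<forall>\<mu>\<ge>\<mu>0. Ks f dbar \<rho>r \<mu> \<noteq> {} \<longrightarrow> bdd_below (Phi f lm xs ` Ks f dbar \<rho>r \<mu>)"
  shows "\<forall>t\<ge>0. Wf xs t \<le> max B0 \<mu>0"
    and "\<forall>\<mu> t. \<mu>0 \<le> \<mu> \<and> 0 \<le> t \<and> (Ks f dbar \<rho>r \<mu> = {} \<or> 2 * (B0 + 2) / Inf (Phi f lm xs ` Ks f dbar \<rho>r \<mu>) \<le> \<delta> * t)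
         \<longrightarrow> Wf xs t \<le> \<mu>"
proof -
  define K2 where "K2 = K1\<^sup>2 / (2 * lm)"
  define \<rho>D where "\<rho>D = sqrt (Bd / clo)"
  have Bd0: "0 \<le> Bd" using B0 Bd by linarith
  have rD2: "Bd / clo \<le> \<rho>D\<^sup>2" "0 \<le> \<rho>D" using Bd0 clo by (auto simp: \<rho>D_def)
  have der: "\<forall>t\<ge>0. (Wf xs has_real_derivative Wd xs t) (at t within {0..})" using W_der by blast
  have DB: "\<And>t. t \<ge> 0 \<Longrightarrow> Wf xs t \<le> Bd \<Longrightarrow> Wd xs t \<le> - \<delta> * Phi f lm xs (x t - xs, Ef t) + \<delta>\<^sup>2 * K2"
    unfolding K2_def by (rule Wd_Phi[OF lap lm dl d clo Bd0 Gb Hb nn K1])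
  have neg: "\<And>t m. t \<ge> 0 \<Longrightarrow> \<mu>0 \<le> m \<Longrightarrow> m \<le> Wf xs t \<Longrightarrow> Wf xs t \<le> Bd \<Longrightarrow> Wd xs t \<le> 0"
  proof -
    fix t m assume t: "t \<ge> 0" and m: "\<mu>0 \<le> m" "m \<le> Wf xs t" and W: "Wf xs t \<le> Bd"
    have "(x t - xs, Ef t) \<in> Ks f dbar \<rho>D \<mu>0"
      by (rule mem_Ks[OF clo W _ Bd0 rD2]) (use m in auto)
    then have "mstar \<le> Phi f lm xs (x t - xs, Ef t)" using ms by (simp add: \<rho>D_def)
    then have "\<delta> * mstar \<le> \<delta> * Phi f lm xs (x t - xs, Ef t)" using dl by (intro mult_left_mono) auto
    moreover have "\<delta>\<^sup>2 * K2 \<le> \<delta> * (mstar / 2)"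
    proof -
      have "\<delta> * K2 \<le> mstar / 2" using small unfolding K2_def by linarith
      then have "\<delta> * (\<delta> * K2) \<le> \<delta> * (mstar / 2)" using dl by (intro mult_left_mono) auto
      then show ?thesis by (simp add: power2_eq_square mult.assoc)
    qed
    moreover have "0 \<le> \<delta> * mstar" using dl ms by simp
    ultimately show "Wd xs t \<le> 0" using DB[OF t W] by linarith
  qed
  have inv: "\<forall>t\<ge>0. Wf xs t \<le> max B0 \<mu>0"
  proof (rule inv_lemma[OF der, where B=Bd])
    show "Wf xs 0 \<le> max B0 \<mu>0" using B0 by simp
    show "max B0 \<mu>0 < Bd" using Bd mu0 B0 by simp
    show "\<forall>t\<ge>0. max B0 \<mu>0 \<le> Wf xs t \<and> Wf xs t \<le> Bd \<longrightarrow> Wd xs t \<le> 0"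
      using neg[of _ "max B0 \<mu>0"] by auto
  qed simp
  then show "\<forall>t\<ge>0. Wf xs t \<le> max B0 \<mu>0" .
  have W1: "\<And>t. t \<ge> 0 \<Longrightarrow> Wf xs t \<le> B0 + 1"
  proof -
    fix t :: real assume "t \<ge> 0"
    then have "Wf xs t \<le> max B0 \<mu>0" using inv by blast
    then show "Wf xs t \<le> B0 + 1" using mu0 B0 by linarith
  qed
  show "\<forall>\<mu> t. \<mu>0 \<le> \<mu> \<and> 0 \<le> t \<and> (Ks f dbar \<rho>r \<mu> = {} \<or> 2 * (B0 + 2) / Inf (Phi f lm xs ` Ks f dbar \<rho>r \<mu>) \<le> \<delta> * t)
         \<longrightarrow> Wf xs t \<le> \<mu>"
  proof (intro allI impI)
    fix \<mu> t assume h: "\<mu>0 \<le> \<mu> \<and> 0 \<le> t \<and> (Ks f dbar \<rho>r \<mu> = {} \<or> 2 * (B0 + 2) / Inf (Phi f lm xs ` Ks f dbar \<rho>r \<mu>) \<le> \<delta> * t)"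
    then have mu: "\<mu>0 \<le> \<mu>" and t: "0 \<le> t" by auto
    have rr1: "(B0 + 1) / clo \<le> \<rho>r\<^sup>2" using rr clo by (smt (verit) divide_right_mono)
    have B01: "0 \<le> B0 + 1" using B0 by simp
    show "Wf xs t \<le> \<mu>"
    proof (rule ccontr)
      assume "\<not> Wf xs t \<le> \<mu>"
      then have gt: "\<mu> < Wf xs t" by simp
      have memr: "\<And>s. s \<ge> 0 \<Longrightarrow> \<mu> \<le> Wf xs s \<Longrightarrow> (x s - xs, Ef s) \<in> Ks f dbar \<rho>r \<mu>"
        by (rule mem_Ks[OF clo W1 _ B01 rr1 rr(2)]) auto
      show False
      proof (cases "Ks f dbar \<rho>r \<mu> = {}")
        case True then show False using memr[OF t] gt by auto
      next
        case False
        then have T: "2 * (B0 + 2) / Inf (Phi f lm xs ` Ks f dbar \<rho>r \<mu>) \<le> \<delta> * t" using h by auto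
        define m where "m = Inf (Phi f lm xs ` Ks f dbar \<rho>r \<mu>)"
        have sub: "Ks f dbar \<rho>r \<mu> \<subseteq> Ks f dbar \<rho>D \<mu>0"
          by (rule Ks_mono) (use rr mu in \<open>auto simp: \<rho>D_def\<close>)
        have mm: "mstar \<le> m" unfolding m_def
          using False sub ms by (intro cInf_greatest) (auto simp: \<rho>D_def)
        have mpos: "m > 0" using mm ms by simp
        have mle: "\<forall>p\<in>Ks f dbar \<rho>r \<mu>. m \<le> Phi f lm xs p"
          unfolding m_def using infp mu False by (auto intro!: cInf_lower)
        have "\<exists>t0. 0 \<le> t0 \<and> t0 \<le> t \<and> Wf xs t0 \<le> \<mu>"
        proof (rule ccontr)
          assume "\<not> ?thesis"
          then have above: "\<forall>s. 0 \<le> s \<and> s \<le> t \<longrightarrow> \<mu> < Wf xs s" by force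
          have rate: "\<forall>s. 0 \<le> s \<and> s \<le> t \<longrightarrow> Wd xs s \<le> - (\<delta> * m / 2)"
          proof (intro allI impI)
            fix s assume s: "0 \<le> s \<and> s \<le> t"
            have "\<mu> \<le> Wf xs s" using above s by force
            then have "m \<le> Phi f lm xs (x s - xs, Ef s)" using mle memr s by blast
            then have "\<delta> * m \<le> \<delta> * Phi f lm xs (x s - xs, Ef s)" using dl by (intro mult_left_mono) auto
            moreover have "\<delta>\<^sup>2 * K2 \<le> \<delta> * (m / 2)"
            proof -
              have "\<delta> * K2 \<le> m / 2" using small mm unfolding K2_def by linarith
              then have "\<delta> * (\<delta> * K2) \<le> \<delta> * (m / 2)" using dl by (intro mult_left_mono) auto
              then show ?thesis by (simp add: power2_eq_square mult.assoc)
            qed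
            moreover have "Wf xs s \<le> Bd" using W1[of s] s Bd by simp
            ultimately show "Wd xs s \<le> - (\<delta> * m / 2)" using DB[of s] s by simp
          qed
          have "Wf xs t \<le> Wf xs 0 - \<delta> * m / 2 * (t - 0)"
            by (rule decay_lemma[OF der _ t]) (use rate in auto)
          moreover have "B0 + 2 \<le> \<delta> * m / 2 * t"
          proof -
            have "2 * (B0 + 2) / m \<le> \<delta> * t" using T by (simp add: m_def)
            then have "2 * (B0 + 2) \<le> \<delta> * t * m" using mpos by (simp add: divide_le_eq)
            then show ?thesis by (simp add: field_simps)
          qed
          ultimately have "Wf xs t \<le> -2" using B0 by simp
          then show False using gt mu mu0 by simp
        qed
        then obtain t0 where t0: "0 \<le> t0" "t0 \<le> t" "Wf xs t0 \<le> \<mu>" by blast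
        show False
        proof (cases "\<mu> < Bd")
          case True
          have "\<forall>s\<ge>t0. Wf xs s \<le> \<mu>"
            by (rule inv_lemma[OF der t0(1) t0(3) True]) (use neg[of _ \<mu>] mu t0(1) in auto)
          then show False using t0 gt by force
        next
          case False
          then show False using W1[OF t] Bd gt by simp
        qed
      qed
    qed
  qed
qed

end

lemma T_mono:
  fixes f :: "'n::finite \<Rightarrow> real^'n \<Rightarrow> real"
  assumes C2: "\<forall>j. C2_fun (f j)"
    and minimizer: "\<forall>y. (\<Sum>j\<in>UNIV. f j xs) \<le> (\<Sum>j\<in>UNIV. f j y)"
    and smg: "\<forall>x y. x \<noteq> y \<longrightarrow>
          (\<Sum>k\<in>UNIV. (x $ k - y $ k) *
             (pderiv_k (\<lambda>z. \<Sum>j\<in>UNIV. f j z) k x - pderiv_k (\<lambda>z. \<Sum>j\<in>UNIV. f j z) k y)) > 0"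
    and lm: "lm > 0" and clo: "clo > 0" and ch: "ch \<ge> 0"
    and Tdef: "T = (\<lambda>r \<mu>. if Ks f dbar (sqrt ((ch * r\<^sup>2 + 2) / clo)) \<mu> = {} then 0
        else 2 * (ch * r\<^sup>2 + 2) / Inf (Phi f lm xs ` Ks f dbar (sqrt ((ch * r\<^sup>2 + 2) / clo)) \<mu>))"
  shows "\<forall>r r' \<mu> \<mu>'. 0 \<le> r \<and> r \<le> r' \<and> 0 < \<mu>' \<and> \<mu>' \<le> \<mu> \<longrightarrow> T r \<mu> \<le> T r' \<mu>'"
proof (intro allI impI)
  fix r r' \<mu> \<mu>' :: real assume h: "0 \<le> r \<and> r \<le> r' \<and> 0 < \<mu>' \<and> \<mu>' \<le> \<mu>"
  define \<rho> where "\<rho> = (\<lambda>r. sqrt ((ch * r\<^sup>2 + 2) / clo))"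
  have Tnn: "\<And>r \<mu>. \<mu> > 0 \<Longrightarrow> 0 \<le> T r \<mu>"
  proof -
    fix r \<mu> :: real assume mu: "\<mu> > 0"
    show "0 \<le> T r \<mu>"
    proof (cases "Ks f dbar (\<rho> r) \<mu> = {}")
      case True then show ?thesis by (simp add: Tdef \<rho>_def)
    next
      case False
      have "Inf (Phi f lm xs ` Ks f dbar (\<rho> r) \<mu>) > 0" by (rule Inf_Phi(1)[OF C2 minimizer smg lm mu False])
      moreover have "0 \<le> ch * r\<^sup>2" using ch by simp
      ultimately show ?thesis using False by (simp add: Tdef \<rho>_def)
    qed
  qed
  have rho_mono: "\<rho> r \<le> \<rho> r'"
  proof -
    have "r\<^sup>2 \<le> r'\<^sup>2" using h by (intro power_mono) auto
    then have "ch * r\<^sup>2 \<le> ch * r'\<^sup>2" using ch by (intro mult_left_mono) auto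
    then show ?thesis unfolding \<rho>_def using clo by (intro real_sqrt_le_mono divide_right_mono) auto
  qed
  show "T r \<mu> \<le> T r' \<mu>'"
  proof (cases "Ks f dbar (\<rho> r) \<mu> = {}")
    case True then show ?thesis using Tnn[of \<mu>' r'] h by (simp add: Tdef \<rho>_def)
  next
    case False
    have sub: "Ks f dbar (\<rho> r) \<mu> \<subseteq> Ks f dbar (\<rho> r') \<mu>'"
    proof (rule Ks_mono[OF rho_mono])
      have "0 \<le> ch * r\<^sup>2" using ch by simp
      then show "0 \<le> \<rho> r" unfolding \<rho>_def using clo by simp
    qed (use h in auto)
    then have ne': "Ks f dbar (\<rho> r') \<mu>' \<noteq> {}" using False by auto
    have mu: "\<mu> > 0" using h by simp
    have I1: "Inf (Phi f lm xs ` Ks f dbar (\<rho> r) \<mu>) > 0" by (rule Inf_Phi(1)[OF C2 minimizer smg lm mu False])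
    have I2: "Inf (Phi f lm xs ` Ks f dbar (\<rho> r') \<mu>') > 0" using Inf_Phi(1)[OF C2 minimizer smg lm _ ne'] h by simp
    have I12: "Inf (Phi f lm xs ` Ks f dbar (\<rho> r') \<mu>') \<le> Inf (Phi f lm xs ` Ks f dbar (\<rho> r) \<mu>)"
      using False sub Inf_Phi(3)[OF C2 minimizer smg lm _ ne'] h by (intro cInf_superset_mono) auto
    have "ch * r\<^sup>2 \<le> ch * r'\<^sup>2" using ch h by (intro mult_left_mono power_mono) auto
    then have "2 * (ch * r\<^sup>2 + 2) / Inf (Phi f lm xs ` Ks f dbar (\<rho> r) \<mu>) \<le> 2 * (ch * r'\<^sup>2 + 2) / Inf (Phi f lm xs ` Ks f dbar (\<rho> r') \<mu>')"
      using I1 I2 I12 ch by (intro frac_le) auto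
    then show ?thesis using False ne' by (simp add: Tdef \<rho>_def)
  qed
qed

theorem corollary2:
  fixes f :: "'n::finite \<Rightarrow> real^'n \<Rightarrow> real"
    and a :: "'n \<Rightarrow> 'n \<Rightarrow> real"
    and dbar :: "'n \<Rightarrow> real"
    and xstar :: "real^'n"
    and R :: "'n \<Rightarrow> nat \<Rightarrow> 'n \<Rightarrow> real"
  assumes m2: "CARD('n) \<ge> 2"
    and minimizer: "\<forall>y. (\<Sum>j\<in>UNIV. f j xstar) \<le> (\<Sum>j\<in>UNIV. f j y)"
    and C2: "\<forall>j. C2_fun (f j)"
    and strict_mono_grad: "\<forall>x y. x \<noteq> y \<longrightarrow>
          (\<Sum>k\<in>UNIV. (x $ k - y $ k) *
             (pderiv_k (\<lambda>z. \<Sum>j\<in>UNIV. f j z) k x - pderiv_k (\<lambda>z. \<Sum>j\<in>UNIV. f j z) k y)) > 0"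
    and a_sym: "\<forall>j l. a j l = a l j"
    and a_nonneg: "\<forall>j l. a j l \<ge> 0"
    and a_diag: "\<forall>j. a j j = 0"
    and GI_conn: "interference_connected f"
    and GC_conn: "\<forall>k. induced_connected a (VC f k)"
    and dbar_pos: "\<forall>j. dbar j > 0"
    and R_adm: "admissible_R f R"
  shows "\<exists>\<phi>. class_KL \<phi> \<and>
     (\<forall>\<Delta> v. \<Delta> > 0 \<and> v > 0 \<longrightarrow>
       (\<exists>\<delta>s>0. \<forall>\<delta>. 0 < \<delta> \<and> \<delta> < \<delta>s \<longrightarrow>
         (\<forall>(x :: real \<Rightarrow> real^'n) (w :: 'n \<Rightarrow> 'n \<Rightarrow> real \<Rightarrow> real).
            let g = (\<lambda>j k t. w j k t + pderiv_k (f j) k (x t)) in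
            (\<forall>t\<ge>0. (x has_vector_derivative (\<chi> j. - (\<delta> * dbar j) * g j j t)) (at t within {0..}))
            \<and> (\<forall>j. \<forall>k\<in>VC f j. \<forall>t\<ge>0.
                 (w j k has_vector_derivative
                    (- (\<Sum>l\<in>VC f k. a j l * (g j k t - g l k t)))) (at t within {0..}))
            \<and> (\<forall>j. \<forall>k\<in>VC f j. w j k 0 = 0)
            \<and> chi_norm f R (\<lambda>j k. g j k 0) (x 0) xstar < \<Delta>
            \<longrightarrow> (\<forall>t\<ge>0. chi_norm f R (\<lambda>j k. g j k t) (x t) xstar
                         \<le> \<phi> (chi_norm f R (\<lambda>j k. g j k 0) (x 0) xstar) (\<delta> * t) + v))))"
proof -
  obtain lm where lm: "lm > 0" and lap: "\<forall>\<epsilon> :: 'n \<Rightarrow> 'n \<Rightarrow> real. (\<forall>k. (\<Sum>j\<in>VC f k. \<epsilon> j k) = 0) \<longrightarrow>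
     lm * (\<Sum>k\<in>UNIV. \<Sum>j\<in>VC f k. (\<epsilon> j k)\<^sup>2) \<le> (\<Sum>k\<in>UNIV. \<Sum>j\<in>VC f k. \<Sum>l\<in>VC f k. a j l * (\<epsilon> j k - \<epsilon> l k)\<^sup>2)"
    using lap_bound[OF a_nonneg GC_conn] by blast
  define cP where "cP = (\<lambda>j. real (card (VC f j)) / dbar j)"
  have cardV: "\<And>j. card (VC f j) \<ge> 1" using VC_self by (metis One_nat_def Suc_leI card_gt_0_iff empty_iff finite)
  have cPpos: "\<And>j. cP j > 0"
  proof -
    fix j
    have "real (card (VC f j)) > 0" using cardV[of j] by simp
    moreover have "dbar j > 0" using dbar_pos by blast
    ultimately show "cP j > 0" by (simp add: cP_def)
  qed
  define clo where "clo = min 1 (Min (range cP))"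
  define ch where "ch = max 1 (Max (range cP))"
  have clo: "0 < clo" "clo \<le> 1" "\<forall>j. clo \<le> card (VC f j) / dbar j"
  proof -
    have "Min (range cP) > 0" using cPpos by (subst Min_gr_iff) auto
    then show "0 < clo" by (simp add: clo_def)
    show "clo \<le> 1" by (simp add: clo_def)
    show "\<forall>j. clo \<le> card (VC f j) / dbar j"
    proof
      fix j have "Min (range cP) \<le> cP j" by (rule Min_le) auto
      moreover have "clo \<le> Min (range cP)" by (simp add: clo_def)
      ultimately have "clo \<le> cP j" by linarith
      then show "clo \<le> card (VC f j) / dbar j" by (simp add: cP_def)
    qed
  qed
  have ch: "1 \<le> ch" "\<forall>j. card (VC f j) / dbar j \<le> ch"
  proof -
    show "1 \<le> ch" by (simp add: ch_def)
    show "\<forall>j. card (VC f j) / dbar j \<le> ch"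
    proof
      fix j have "cP j \<le> Max (range cP)" by (rule Max_ge) auto
      moreover have "Max (range cP) \<le> ch" by (simp add: ch_def)
      ultimately have "cP j \<le> ch" by linarith
      then show "card (VC f j) / dbar j \<le> ch" by (simp add: cP_def)
    qed
  qed
  define Dm where "Dm = Max (range dbar)"
  have Dm: "\<forall>j. dbar j \<le> Dm" unfolding Dm_def by (auto intro: Max_ge)
  define T where "T = (\<lambda>r \<mu>. if Ks f dbar (sqrt ((ch * r\<^sup>2 + 2) / clo)) \<mu> = {} then 0
        else 2 * (ch * r\<^sup>2 + 2) / Inf (Phi f lm xstar ` Ks f dbar (sqrt ((ch * r\<^sup>2 + 2) / clo)) \<mu>))"
  have Tmono: "\<forall>r r' \<mu> \<mu>'. 0 \<le> r \<and> r \<le> r' \<and> 0 < \<mu>' \<and> \<mu>' \<le> \<mu> \<longrightarrow> T r \<mu> \<le> T r' \<mu>'"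
    by (rule T_mono[OF C2 minimizer strict_mono_grad lm clo(1) _ T_def]) (use ch in auto)
  define gq where "gq = (\<lambda>\<mu>. sqrt (\<mu> / clo))"
  define c where "c = sqrt (ch / clo)"
  have cpos: "c > 0" using ch clo by (simp add: c_def)
  obtain \<phi> where KL: "class_KL \<phi>" and P\<phi>: "\<forall>r\<ge>0. \<forall>s\<ge>0. \<forall>u. 0 \<le> u \<and> u \<le> c*r \<and> (\<forall>\<mu>>0. T r \<mu> \<le> s \<longrightarrow> u \<le> gq \<mu>) \<longrightarrow> u \<le> \<phi> r s"
  proof -
    have "\<exists>\<phi>. class_KL \<phi> \<and> (\<forall>r\<ge>0. \<forall>s\<ge>0. \<forall>u. 0 \<le> u \<and> u \<le> c*r \<and> (\<forall>\<mu>>0. T r \<mu> \<le> s \<longrightarrow> u \<le> gq \<mu>) \<longrightarrow> u \<le> \<phi> r s)"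
    proof (rule KL_exists[OF cpos])
      show "\<forall>r r' \<mu>. 0 \<le> r \<and> r \<le> r' \<and> 0 < \<mu> \<longrightarrow> T r \<mu> \<le> T r' \<mu>" using Tmono by blast
      show "\<forall>\<mu>>0. 0 \<le> gq \<mu>" using clo(1) by (simp add: gq_def)
      show "\<forall>\<epsilon>>0. \<exists>\<mu>>0. gq \<mu> < \<epsilon>"
      proof (intro allI impI)
        fix \<epsilon> :: real assume e: "\<epsilon> > 0"
        have "clo * \<epsilon>\<^sup>2 / 4 > 0" using e clo by simp
        moreover have "gq (clo * \<epsilon>\<^sup>2 / 4) < \<epsilon>"
        proof -
          have "gq (clo * \<epsilon>\<^sup>2 / 4) = sqrt ((\<epsilon> / 2)\<^sup>2)" using clo by (simp add: gq_def power_divide)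
          also have "\<dots> = \<epsilon> / 2" using e by simp
          finally show ?thesis using e by simp
        qed
        ultimately show "\<exists>\<mu>>0. gq \<mu> < \<epsilon>" by blast
      qed
    qed
    then show ?thesis using that by blast
  qed
  have \<phi>nn: "\<And>r s. 0 \<le> r \<Longrightarrow> 0 \<le> s \<Longrightarrow> 0 \<le> \<phi> r s"
  proof -
    fix r s :: real assume r: "0 \<le> r" and s: "0 \<le> s"
    have K: "class_K (\<lambda>r. \<phi> r s)" using KL s by (simp add: class_KL_def)
    then have "\<phi> 0 s = 0" by (simp add: class_K_def)
    moreover have "\<phi> 0 s \<le> \<phi> r s"
    proof (cases "r = 0")
      case False
      have sm: "strict_mono_on {0..} (\<lambda>r. \<phi> r s)" using K by (simp add: class_K_def)
      have "(0::real) \<in> {0..}" "r \<in> {0..}" "0 < r" using r False by auto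
      then show ?thesis using strict_mono_onD[OF sm, of 0 r] by simp
    qed simp
    ultimately show "0 \<le> \<phi> r s" by simp
  qed
  show ?thesis
  proof (intro exI[of _ \<phi>] conjI KL allI impI)
    fix \<Delta> v :: real assume Dv: "\<Delta> > 0 \<and> v > 0"
    define Bd where "Bd = ch * \<Delta>\<^sup>2 + 2"
    have Bd0: "0 \<le> Bd" using ch by (simp add: Bd_def)
    define \<rho>D where "\<rho>D = sqrt (Bd / clo)"
    have compB: "compact (cball xstar \<rho>D)" by simp
    obtain G where G: "G \<ge> 0" "\<forall>j. \<forall>y\<in>cball xstar \<rho>D. \<bar>pderiv_k (\<lambda>z. \<Sum>i\<in>UNIV. f i z) j y\<bar> \<le> G"
      using bounds_on_compact[OF compB, of "\<lambda>j y. pderiv_k (\<lambda>z. \<Sum>i\<in>UNIV. f i z) j y"]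
        pF_cont[OF C2] continuous_on_subset by blast
    obtain H where H: "H \<ge> 0" "\<forall>p::'n\<times>'n\<times>'n. \<forall>y\<in>cball xstar \<rho>D. \<bar>pderiv_k (pderiv_k (f (fst p)) (fst (snd p))) (snd (snd p)) y\<bar> \<le> H"
      using bounds_on_compact[OF compB, of "\<lambda>p y. pderiv_k (pderiv_k (f (fst p)) (fst (snd p))) (snd (snd p)) y"]
        C2 C2_ppcont continuous_on_subset by blast
    define K1 where "K1 = 2 * (real CARD('n))\<^sup>2 * \<rho>D + 2 * (real CARD('n))^3 * Dm * H * (G + \<rho>D)"
    define K2 where "K2 = K1\<^sup>2 / (2 * lm)"
    have K2: "K2 \<ge> 0" using lm by (simp add: K2_def)
    define \<mu>0 where "\<mu>0 = min 1 (clo * v\<^sup>2)"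
    have mu0: "0 < \<mu>0" "\<mu>0 \<le> 1" using clo Dv by (auto simp: \<mu>0_def)
    have gmu0: "gq \<mu>0 \<le> v"
    proof -
      have "\<mu>0 / clo \<le> v\<^sup>2" using clo by (simp add: \<mu>0_def divide_le_eq mult.commute)
      then have "gq \<mu>0 \<le> sqrt (v\<^sup>2)" unfolding gq_def by (rule real_sqrt_le_mono)
      then show ?thesis using Dv by simp
    qed
    define mstar where "mstar = (if Ks f dbar \<rho>D \<mu>0 = {} then 1 else Inf (Phi f lm xstar ` Ks f dbar \<rho>D \<mu>0))"
    have ms: "0 < mstar" "\<forall>p\<in>Ks f dbar \<rho>D \<mu>0. mstar \<le> Phi f lm xstar p"
      using Inf_Phi[OF C2 minimizer strict_mono_grad lm mu0(1)] by (auto simp: mstar_def)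
    define \<delta>s where "\<delta>s = min 1 (mstar / (2 * K2 + 1))"
    have \<delta>s: "\<delta>s > 0" using ms K2 by (simp add: \<delta>s_def)
    show "\<exists>\<delta>s>0. \<forall>\<delta>. 0 < \<delta> \<and> \<delta> < \<delta>s \<longrightarrow>
         (\<forall>(x :: real \<Rightarrow> real^'n) (w :: 'n \<Rightarrow> 'n \<Rightarrow> real \<Rightarrow> real).
            let g = (\<lambda>j k t. w j k t + pderiv_k (f j) k (x t)) in
            (\<forall>t\<ge>0. (x has_vector_derivative (\<chi> j. - (\<delta> * dbar j) * g j j t)) (at t within {0..}))
            \<and> (\<forall>j. \<forall>k\<in>VC f j. \<forall>t\<ge>0.
                 (w j k has_vector_derivative
                    (- (\<Sum>l\<in>VC f k. a j l * (g j k t - g l k t)))) (at t within {0..}))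
            \<and> (\<forall>j. \<forall>k\<in>VC f j. w j k 0 = 0)
            \<and> chi_norm f R (\<lambda>j k. g j k 0) (x 0) xstar < \<Delta>
            \<longrightarrow> (\<forall>t\<ge>0. chi_norm f R (\<lambda>j k. g j k t) (x t) xstar
                         \<le> \<phi> (chi_norm f R (\<lambda>j k. g j k 0) (x 0) xstar) (\<delta> * t) + v))"
    proof (intro exI[of _ \<delta>s] conjI \<delta>s allI impI)
      fix \<delta> :: real and x :: "real \<Rightarrow> real^'n" and w :: "'n \<Rightarrow> 'n \<Rightarrow> real \<Rightarrow> real"
      assume dl: "0 < \<delta> \<and> \<delta> < \<delta>s"
      have dl1: "\<delta> \<le> 1" using dl by (simp add: \<delta>s_def)
      have small: "\<delta> * K2 \<le> mstar / 2"
      proof -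
        have "\<delta> * (2 * K2 + 1) < mstar" using dl K2 by (simp add: \<delta>s_def less_divide_eq)
        then show ?thesis using dl by (simp add: algebra_simps)
      qed
      show "let g = (\<lambda>j k t. w j k t + pderiv_k (f j) k (x t)) in
            (\<forall>t\<ge>0. (x has_vector_derivative (\<chi> j. - (\<delta> * dbar j) * g j j t)) (at t within {0..}))
            \<and> (\<forall>j. \<forall>k\<in>VC f j. \<forall>t\<ge>0.
                 (w j k has_vector_derivative
                    (- (\<Sum>l\<in>VC f k. a j l * (g j k t - g l k t)))) (at t within {0..}))
            \<and> (\<forall>j. \<forall>k\<in>VC f j. w j k 0 = 0)
            \<and> chi_norm f R (\<lambda>j k. g j k 0) (x 0) xstar < \<Delta>
            \<longrightarrow> (\<forall>t\<ge>0. chi_norm f R (\<lambda>j k. g j k t) (x t) xstar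
                         \<le> \<phi> (chi_norm f R (\<lambda>j k. g j k 0) (x 0) xstar) (\<delta> * t) + v)"
        unfolding Let_def
      proof (intro impI)
        assume hyp: "(\<forall>t\<ge>0. (x has_vector_derivative (\<chi> j. - (\<delta> * dbar j) * (w j j t + pderiv_k (f j) j (x t)))) (at t within {0..}))
            \<and> (\<forall>j. \<forall>k\<in>VC f j. \<forall>t\<ge>0.
                 (w j k has_vector_derivative
                    (- (\<Sum>l\<in>VC f k. a j l * ((w j k t + pderiv_k (f j) k (x t)) - (w l k t + pderiv_k (f l) k (x t)))))) (at t within {0..}))
            \<and> (\<forall>j. \<forall>k\<in>VC f j. w j k 0 = 0)
            \<and> chi_norm f R (\<lambda>j k. w j k 0 + pderiv_k (f j) k (x 0)) (x 0) xstar < \<Delta>"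
        interpret D: dyn f a dbar \<delta> x w
          using hyp C2 a_sym by unfold_locales auto
        define r where "r = chi_norm f R (\<lambda>j k. w j k 0 + pderiv_k (f j) k (x 0)) (x 0) xstar"
        have r0: "0 \<le> r" unfolding r_def chi_norm_def by (rule real_sqrt_ge_zero) (intro add_nonneg_nonneg sum_nonneg; simp)
        have rD: "r < \<Delta>" using hyp by (simp add: r_def)
        define chit where "chit = (\<lambda>t. chi_norm f R (\<lambda>j k. w j k t + pderiv_k (f j) k (x t)) (x t) xstar)"
        have chit_nn: "\<And>t. 0 \<le> chit t" unfolding chit_def chi_norm_def by (rule real_sqrt_ge_zero) (intro add_nonneg_nonneg sum_nonneg; simp)
        have chisq: "\<And>t. (chit t)\<^sup>2 = D.Ef t + (norm (x t - xstar))\<^sup>2"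
          unfolding chit_def chi_norm_sq[OF R_adm] D.Ef_def D.gg_def ..
        have Pdef: "\<And>t. D.Wf xstar t = (\<Sum>j\<in>UNIV. (card (VC f j) / dbar j) * (x t $ j - xstar $ j)\<^sup>2) + D.Ef t"
          by (simp add: D.Wf_def)
        have Wlow: "\<And>t. clo * (chit t)\<^sup>2 \<le> D.Wf xstar t"
        proof -
          fix t
          have "clo * (norm (x t - xstar))\<^sup>2 = (\<Sum>j\<in>UNIV. clo * (x t $ j - xstar $ j)\<^sup>2)"
            by (simp add: norm_sq_vec sum_distrib_left)
          also have "\<dots> \<le> (\<Sum>j\<in>UNIV. (card (VC f j) / dbar j) * (x t $ j - xstar $ j)\<^sup>2)"
            using clo by (intro sum_mono mult_right_mono) auto
          finally have 1: "clo * (norm (x t - xstar))\<^sup>2 \<le> (\<Sum>j\<in>UNIV. (card (VC f j) / dbar j) * (x t $ j - xstar $ j)\<^sup>2)" .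
          have "clo * D.Ef t \<le> 1 * D.Ef t" using clo D.Ef_nn[of t] by (intro mult_right_mono) auto
          then show "clo * (chit t)\<^sup>2 \<le> D.Wf xstar t" using 1 unfolding chisq Pdef by (simp add: algebra_simps)
        qed
        define B0 where "B0 = ch * r\<^sup>2"
        have B0: "0 \<le> B0" "D.Wf xstar 0 \<le> B0"
        proof -
          show "0 \<le> B0" using ch by (simp add: B0_def)
          have "(\<Sum>j\<in>UNIV. (card (VC f j) / dbar j) * (x 0 $ j - xstar $ j)\<^sup>2) \<le> (\<Sum>j\<in>UNIV. ch * (x 0 $ j - xstar $ j)\<^sup>2)"
            using ch by (intro sum_mono mult_right_mono) auto
          also have "\<dots> = ch * (norm (x 0 - xstar))\<^sup>2" by (simp add: norm_sq_vec sum_distrib_left)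
          finally have 1: "(\<Sum>j\<in>UNIV. (card (VC f j) / dbar j) * (x 0 $ j - xstar $ j)\<^sup>2) \<le> ch * (norm (x 0 - xstar))\<^sup>2" .
          have "1 * D.Ef 0 \<le> ch * D.Ef 0" using ch D.Ef_nn[of 0] by (intro mult_right_mono) auto
          then have "D.Wf xstar 0 \<le> ch * (chit 0)\<^sup>2" using 1 unfolding chisq Pdef by (simp add: algebra_simps)
          moreover have "chit 0 = r" by (simp add: chit_def r_def)
          ultimately show "D.Wf xstar 0 \<le> B0" by (simp add: B0_def)
        qed
        have rr2: "r\<^sup>2 \<le> \<Delta>\<^sup>2" using r0 rD by (intro power_mono) auto
        have BdB0: "B0 + 2 \<le> Bd" using rr2 ch by (simp add: B0_def Bd_def mult_left_mono)
        define \<rho>r where "\<rho>r = sqrt ((ch * r\<^sup>2 + 2) / clo)"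
        have rr: "(B0 + 2) / clo \<le> \<rho>r\<^sup>2" "0 \<le> \<rho>r" "\<rho>r \<le> sqrt (Bd / clo)"
        proof -
          have nn: "0 \<le> (ch * r\<^sup>2 + 2) / clo" using ch clo by simp
          then show "(B0 + 2) / clo \<le> \<rho>r\<^sup>2" by (simp add: \<rho>r_def B0_def)
          show "0 \<le> \<rho>r" using nn by (simp add: \<rho>r_def)
          show "\<rho>r \<le> sqrt (Bd / clo)" unfolding \<rho>r_def using BdB0 clo
            by (intro real_sqrt_le_mono divide_right_mono) (auto simp: B0_def)
        qed
        have Gb: "\<forall>j. \<forall>y\<in>cball xstar (sqrt (Bd / clo)). \<bar>D.pF j y\<bar> \<le> G"
          using G(2) by (simp add: D.pF_def \<rho>D_def)
        have Hb: "\<forall>j k i. \<forall>y\<in>cball xstar (sqrt (Bd / clo)). \<bar>D.H2 j k i y\<bar> \<le> H"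
        proof (intro allI ballI)
          fix j k i y assume "y \<in> cball xstar (sqrt (Bd / clo))"
          then show "\<bar>D.H2 j k i y\<bar> \<le> H" using bspec[OF spec[OF H(2), of "(j,k,i)"], of y] by (simp add: D.H2_def \<rho>D_def)
        qed
        have K1': "K1 = 2 * (real CARD('n))\<^sup>2 * sqrt (Bd / clo) + 2 * (real CARD('n))^3 * Dm * H * (G + sqrt (Bd / clo))"
          by (simp add: K1_def \<rho>D_def)
        have ms': "0 < mstar" "\<forall>p\<in>Ks f dbar (sqrt (Bd / clo)) \<mu>0. mstar \<le> Phi f lm xstar p"
          using ms by (auto simp: \<rho>D_def)
        have small': "\<delta> * (K1\<^sup>2 / (2 * lm)) \<le> mstar / 2" using small by (simp add: K2_def)
        have infp: "\<forall>\<mu>\<ge>\<mu>0. Ks f dbar \<rho>r \<mu> \<noteq> {} \<longrightarrow> bdd_below (Phi f lm xstar ` Ks f dbar \<rho>r \<mu>)"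
        proof (intro allI impI)
          fix \<mu> assume "\<mu>0 \<le> \<mu>" "Ks f dbar \<rho>r \<mu> \<noteq> {}"
          then show "bdd_below (Phi f lm xstar ` Ks f dbar \<rho>r \<mu>)"
            using Inf_Phi(3)[OF C2 minimizer strict_mono_grad lm] mu0 by auto
        qed
        have dpos: "\<forall>j. dbar j > 0" using dbar_pos by blast
        have dl': "0 < \<delta>" using dl by simp
        note ME = D.main_est[OF lap lm dl' dl1 dpos Dm clo B0 mu0 BdB0 rr Gb Hb G(1) H(1) K1' ms' small' infp]
        have ct_bound: "\<And>t. t \<ge> 0 \<Longrightarrow> chit t \<le> c * r + v"
        proof -
          fix t :: real assume t: "t \<ge> 0"
          have "clo * (chit t)\<^sup>2 \<le> max B0 \<mu>0" using Wlow[of t] ME(1) t by force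
          also have "\<dots> \<le> B0 + \<mu>0" using B0 mu0 by simp
          finally have "(chit t)\<^sup>2 \<le> (B0 + \<mu>0) / clo" using clo by (simp add: field_simps)
          also have "\<dots> = (c * r)\<^sup>2 + (gq \<mu>0)\<^sup>2"
            using clo ch mu0 by (simp add: c_def gq_def B0_def power_mult_distrib add_divide_distrib)
          also have "\<dots> \<le> (c * r + gq \<mu>0)\<^sup>2"
          proof -
            have "0 \<le> c * r * gq \<mu>0" using cpos r0 clo mu0 by (simp add: gq_def)
            then show ?thesis by (simp add: power2_eq_square algebra_simps)
          qed
          finally have sq: "(chit t)\<^sup>2 \<le> (c * r + gq \<mu>0)\<^sup>2" .
          have "0 \<le> gq \<mu>0" using clo mu0 by (simp add: gq_def)
          moreover have "0 \<le> c * r" using cpos r0 by simp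
          ultimately have "0 \<le> c * r + gq \<mu>0" by simp
          then have "chit t \<le> c * r + gq \<mu>0" using sq by (rule power2_le_imp_le[rotated])
          then show "chit t \<le> c * r + v" using gmu0 by simp
        qed
        have W_to_chi: "\<And>t \<mu>. t \<ge> 0 \<Longrightarrow> D.Wf xstar t \<le> \<mu> \<Longrightarrow> chit t \<le> gq \<mu>"
        proof -
          fix t \<mu> :: real assume t: "t \<ge> 0" and W: "D.Wf xstar t \<le> \<mu>"
          have "clo * (chit t)\<^sup>2 \<le> \<mu>" using Wlow[of t] W by simp
          then have "(chit t)\<^sup>2 \<le> \<mu> / clo" using clo by (simp add: field_simps)
          then show "chit t \<le> gq \<mu>" unfolding gq_def by (rule real_le_rsqrt)
        qed
        have Tr: "\<And>\<mu>. T r \<mu> = (if Ks f dbar \<rho>r \<mu> = {} then 0 else 2 * (B0 + 2) / Inf (Phi f lm xstar ` Ks f dbar \<rho>r \<mu>))"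
          by (simp add: T_def \<rho>r_def B0_def)
        have dec: "\<And>\<mu> t. \<mu>0 \<le> \<mu> \<Longrightarrow> 0 \<le> t \<Longrightarrow> T r \<mu> \<le> \<delta> * t \<Longrightarrow> chit t \<le> gq \<mu>"
        proof -
          fix \<mu> t :: real assume mu: "\<mu>0 \<le> \<mu>" and t: "0 \<le> t" and T: "T r \<mu> \<le> \<delta> * t"
          have "Ks f dbar \<rho>r \<mu> = {} \<or> 2 * (B0 + 2) / Inf (Phi f lm xstar ` Ks f dbar \<rho>r \<mu>) \<le> \<delta> * t"
            using T unfolding Tr by (auto split: if_splits)
          then have "D.Wf xstar t \<le> \<mu>" using ME(2) mu t by blast
          then show "chit t \<le> gq \<mu>" by (rule W_to_chi[OF t])
        qed
        show "\<forall>t\<ge>0. chi_norm f R (\<lambda>j k. w j k t + pderiv_k (f j) k (x t)) (x t) xstar \<le> \<phi> (chi_norm f R (\<lambda>j k. w j k 0 + pderiv_k (f j) k (x 0)) (x 0) xstar) (\<delta> * t) + v"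
        proof (intro allI impI)
          fix t :: real assume t: "t \<ge> 0"
          have s0: "0 \<le> \<delta> * t" using dl t by simp
          have "chit t \<le> \<phi> r (\<delta> * t) + v"
          proof (cases "chit t \<le> v")
            case True then show ?thesis using \<phi>nn[OF r0 s0] by simp
          next
            case False
            define u where "u = chit t - v"
            have u: "0 \<le> u" "u \<le> c * r" using False ct_bound[OF t] by (auto simp: u_def)
            have cond: "\<forall>\<mu>>0. T r \<mu> \<le> \<delta> * t \<longrightarrow> u \<le> gq \<mu>"
            proof (intro allI impI)
              fix \<mu> :: real assume mu: "\<mu> > 0" "T r \<mu> \<le> \<delta> * t"
              show "u \<le> gq \<mu>"
              proof (cases "\<mu>0 \<le> \<mu>")
                case True then show ?thesis using dec[OF True t mu(2)] Dv by (simp add: u_def)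
              next
                case False
                then have "T r \<mu>0 \<le> T r \<mu>" using Tmono r0 mu mu0 by auto
                then have "chit t \<le> gq \<mu>0" using dec[of \<mu>0 t] t mu by simp
                then show ?thesis using gmu0 \<open>\<not> chit t \<le> v\<close> by simp
              qed
            qed
            have "u \<le> \<phi> r (\<delta> * t)" using P\<phi> r0 s0 u cond by blast
            then show ?thesis by (simp add: u_def)
          qed
          then show "chi_norm f R (\<lambda>j k. w j k t + pderiv_k (f j) k (x t)) (x t) xstar \<le> \<phi> (chi_norm f R (\<lambda>j k. w j k 0 + pderiv_k (f j) k (x 0)) (x 0) xstar) (\<delta> * t) + v"
            by (simp add: chit_def r_def)
        qed
      qed
    qed
  qed
qed

end
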